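(* For every integer $k \ge 1$, the edge set of the hypercube $Q_{2k}$ can be partitioned into the edge sets of $k$ pairwise edge-disjoint spanning trees of $Q_{2k}$ together with a matching consisting of exactly $k$ edges.
   Context: The $n$-dimensional hypercube $Q_n$ is the graph whose vertices are all binary vectors of length $n$, with two vertices adjacent if and only if they differ in exactly one coordinate. A matching is a set of pairwise vertex-disjoint edges. *)

theory Defs
  imports Main
begin

definition hc_verts :: "nat \<Rightarrow> bool list set" where
  "hc_verts n = {v. length v = n}"

definition hc_adj :: "bool list \<Rightarrow> bool list \<Rightarrow> bool" where
  "hc_adj u v \<longleftrightarrow> length u = length v \<and> card {i. i < length u \<and> u ! i \<noteq> v ! i} = 1"

definition hc_edges :: "nat \<Rightarrow> bool list set set" where
  "hc_edges n = {{u, v} | u v. u \<in> hc_verts n \<and> v \<in> hc_verts n \<and> hc_adj u v}"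

definition walk :: "'a set set \<Rightarrow> 'a list \<Rightarrow> bool" where
  "walk E p \<longleftrightarrow> p \<noteq> [] \<and> (\<forall>i. Suc i < length p \<longrightarrow> {p ! i, p ! Suc i} \<in> E)"

definition connected_on :: "'a set \<Rightarrow> 'a set set \<Rightarrow> bool" where
  "connected_on V E \<longleftrightarrow> (\<forall>u\<in>V. \<forall>v\<in>V. \<exists>p. walk E p \<and> hd p = u \<and> last p = v)"

definition has_cycle :: "'a set set \<Rightarrow> bool" where
  "has_cycle E \<longleftrightarrow> (\<exists>p. length p \<ge> 3 \<and> distinct p \<and> walk E p \<and> {last p, hd p} \<in> E)"

definition spanning_tree :: "'a set \<Rightarrow> 'a set set \<Rightarrow> 'a set set \<Rightarrow> bool" where
  "spanning_tree V E T \<longleftrightarrow> T \<subseteq> E \<and> connected_on V T \<and> \<not> has_cycle T"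

definition matching :: "'a set set \<Rightarrow> 'a set set \<Rightarrow> bool" where
  "matching E M \<longleftrightarrow> M \<subseteq> E \<and> (\<forall>e\<in>M. \<forall>f\<in>M. e \<noteq> f \<longrightarrow> e \<inter> f = {})"

end

theory Submission
  imports Defs
begin

lemma walk_single: "walk E [x]"
  by (simp add: walk_def)

lemma walk_Cons2: "walk E (x # y # p) \<longleftrightarrow> {x, y} \<in> E \<and> walk E (y # p)"
proof
  assume w: "walk E (x # y # p)"
  have "{x,y} \<in> E" using w unfolding walk_def by (metis Suc_less_eq length_Cons nth_Cons_0 nth_Cons_Suc zero_less_Suc)
  moreover have "walk E (y # p)" using w unfolding walk_def
    by (metis Suc_less_eq length_Cons list.distinct(1) nth_Cons_Suc)
  ultimately show "{x, y} \<in> E \<and> walk E (y # p)" by simp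
next
  assume a: "{x, y} \<in> E \<and> walk E (y # p)"
  show "walk E (x # y # p)" unfolding walk_def
  proof (intro conjI allI impI)
    fix i assume i: "Suc i < length (x # y # p)"
    show "{(x # y # p) ! i, (x # y # p) ! Suc i} \<in> E"
    proof (cases i)
      case 0 then show ?thesis using a by simp
    next
      case (Suc j) then show ?thesis using a i unfolding walk_def by auto
    qed
  qed simp
qed

definition reach :: "'a set set \<Rightarrow> 'a \<Rightarrow> 'a \<Rightarrow> bool" where
  "reach E u v \<longleftrightarrow> (\<exists>p. walk E p \<and> hd p = u \<and> last p = v)"

lemma reach_refl: "reach E u u"
  unfolding reach_def by (rule exI[of _ "[u]"]) (simp add: walk_single)

lemma reach_step: "{u, v} \<in> E \<Longrightarrow> reach E v w \<Longrightarrow> reach E u w"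
  unfolding reach_def
proof -
  assume e: "{u, v} \<in> E" and "\<exists>p. walk E p \<and> hd p = v \<and> last p = w"
  then obtain p where p: "walk E p" "hd p = v" "last p = w" by blast
  then have "p \<noteq> []" by (simp add: walk_def)
  then obtain q where q: "p = v # q" using p(2) by (cases p) auto
  have "walk E (u # p)" using e p(1) q by (simp add: walk_Cons2)
  moreover have "last (u # p) = w" using p(3) \<open>p \<noteq> []\<close> by simp
  ultimately show "\<exists>p. walk E p \<and> hd p = u \<and> last p = w" by (intro exI[of _ "u # p"]) simp
qed

lemma reach_trans_aux: "walk E p \<Longrightarrow> reach E (last p) w \<Longrightarrow> reach E (hd p) w"
proof (induction p)
  case Nil then show ?case by (simp add: walk_def)
next
  case (Cons x p)
  show ?case
  proof (cases p)
    case Nil then show ?thesis using Cons by simp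
  next
    case (Cons y q)
    have e: "{x, y} \<in> E" and w: "walk E p" using Cons.prems(1) \<open>p = y # q\<close> by (auto simp: walk_Cons2)
    have "reach E (hd p) w" using Cons.IH w Cons.prems(2) \<open>p = y # q\<close> by simp
    then show ?thesis using e \<open>p = y # q\<close> by (simp add: reach_step)
  qed
qed

lemma reach_trans: "reach E u v \<Longrightarrow> reach E v w \<Longrightarrow> reach E u w"
proof -
  assume "reach E u v" "reach E v w"
  then obtain p where "walk E p" "hd p = u" "last p = v" by (auto simp: reach_def)
  then show ?thesis using reach_trans_aux[of E p w] \<open>reach E v w\<close> by simp
qed

lemma reach_sym_aux: "walk E p \<Longrightarrow> reach E (last p) (hd p)"
proof (induction p)
  case Nil then show ?case by (simp add: walk_def)
next
  case (Cons x p)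
  show ?case
  proof (cases p)
    case Nil then show ?thesis by (simp add: reach_refl)
  next
    case (Cons y q)
    have e: "{x, y} \<in> E" and w: "walk E p" using Cons.prems(1) \<open>p = y # q\<close> by (auto simp: walk_Cons2)
    have r1: "reach E (last p) y" using Cons.IH w \<open>p = y # q\<close> by simp
    have "{y, x} \<in> E" using e by (simp add: insert_commute)
    then have "reach E y x" by (rule reach_step) (rule reach_refl)
    then show ?thesis using r1 \<open>p = y # q\<close> reach_trans by fastforce
  qed
qed

lemma reach_sym: "reach E u v \<Longrightarrow> reach E v u"
proof -
  assume "reach E u v"
  then obtain p where "walk E p" "hd p = u" "last p = v" by (auto simp: reach_def)
  then show ?thesis using reach_sym_aux[of E p] by simp
qed

lemma parent_tree:
  fixes h :: "'a \<Rightarrow> nat"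
  assumes r: "r \<in> V"
    and P: "\<And>v. v \<in> V \<Longrightarrow> v \<noteq> r \<Longrightarrow> P v \<in> V \<and> h (P v) < h v"
    and T: "T = {{v, P v} | v. v \<in> V \<and> v \<noteq> r}"
    and TE: "T \<subseteq> E"
  shows "spanning_tree V E T"
proof -
  have toroot: "reach T v r" if "v \<in> V" for v
    using that
  proof (induction "h v" arbitrary: v rule: less_induct)
    case less
    show ?case
    proof (cases "v = r")
      case True then show ?thesis by (simp add: reach_refl)
    next
      case False
      have "{v, P v} \<in> T" using T less.prems False by blast
      moreover have "reach T (P v) r" using less.hyps P[OF less.prems False] by blast
      ultimately show ?thesis by (rule reach_step)
    qed
  qed
  have conn: "connected_on V T"
    unfolding connected_on_def
  proof (intro ballI)
    fix u v assume "u \<in> V" "v \<in> V"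
    then have "reach T u r" "reach T r v" using toroot reach_sym[OF toroot[of v]] by auto
    then have "reach T u v" by (rule reach_trans)
    then show "\<exists>p. walk T p \<and> hd p = u \<and> last p = v" by (simp add: reach_def)
  qed
  have key: "b = P a" if "{a, b} \<in> T" "h b \<le> h a" for a b
  proof -
    have "{a, b} \<in> {{v, P v} | v. v \<in> V \<and> v \<noteq> r}" using that(1) T by simp
    then obtain v where v: "{a, b} = {v, P v}" "v \<in> V" "v \<noteq> r" by blast
    then have hv: "h (P v) < h v" using P by blast
    from v(1) have "(a = v \<and> b = P v) \<or> (a = P v \<and> b = v)" by (simp add: doubleton_eq_iff)
    then show ?thesis using hv that(2) by (metis not_less)
  qed
  have acyc: "\<not> has_cycle T"
  proof
    assume "has_cycle T"
    then obtain p where p: "length p \<ge> 3" "distinct p" "walk T p" "{last p, hd p} \<in> T"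
      unfolding has_cycle_def by blast
    define n where "n = length p"
    have n3: "n \<ge> 3" using p(1) n_def by simp
    have "finite (h ` set p)" "h ` set p \<noteq> {}" using n3 n_def by auto
    then obtain x where x: "x \<in> set p" "\<forall>y\<in>set p. h y \<le> h x"
    proof -
      have "Max (h ` set p) \<in> h ` set p" using \<open>finite (h ` set p)\<close> \<open>h ` set p \<noteq> {}\<close> by (rule Max_in)
      then obtain x where "x \<in> set p" "h x = Max (h ` set p)" by (metis imageE)
      moreover have "\<forall>y\<in>set p. h y \<le> Max (h ` set p)" by simp
      ultimately show ?thesis using that by metis
    qed
    then obtain i where i: "i < n" "p ! i = x" using n_def by (metis in_set_conv_nth)
    have edge: "{p ! a, p ! ((a + 1) mod n)} \<in> T" if "a < n" for a
    proof (cases "a + 1 < n")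
      case True then show ?thesis using p(3) unfolding walk_def n_def by simp
    next
      case False
      then have "a = n - 1" using that by simp
      moreover have "p \<noteq> []" using n3 n_def by auto
      then have "last p = p ! (n - 1)" "hd p = p ! 0" using n_def
        by (simp_all add: last_conv_nth hd_conv_nth)
      ultimately show ?thesis using p(4) n3 by simp
    qed
    define a1 where "a1 = (i + 1) mod n"
    define a0 where "a0 = (i + n - 1) mod n"
    have a1n: "a1 < n" "a0 < n" using n3 by (auto simp: a1_def a0_def)
    have a0s: "(a0 + 1) mod n = i"
    proof (cases "i = 0")
      case True then show ?thesis using n3 by (simp add: a0_def)
    next
      case False
      then have eq: "i + n - 1 = (i - 1) + n" by simp
      have "(i - 1 + n) mod n = i - 1" using i(1) by simp
      then have "a0 = i - 1" unfolding a0_def by (simp only: eq)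
      then show ?thesis using False i(1) by simp
    qed
    have ne: "a1 \<noteq> a0"
    proof
      assume "a1 = a0"
      then have "(i + 1) mod n = (i + n - 1) mod n" by (simp add: a1_def a0_def)
      show False
      proof (cases "i = 0")
        case True then show ?thesis using \<open>a1 = a0\<close> n3 by (simp add: a1_def a0_def)
      next
        case False
        then have eq: "i + n - 1 = (i - 1) + n" by simp
        have "(i - 1 + n) mod n = i - 1" using i(1) by simp
        then have "a0 = i - 1" unfolding a0_def by (simp only: eq)
        moreover have "a1 = (if i + 1 = n then 0 else i + 1)" using i(1) by (simp add: a1_def)
        ultimately show ?thesis using \<open>a1 = a0\<close> n3 False by (auto split: if_splits)
      qed
    qed
    have e1: "{p ! i, p ! a1} \<in> T" using edge[OF i(1)] a1_def by simp
    have e0: "{p ! i, p ! a0} \<in> T" using edge[OF a1n(2)] a0s by (simp add: insert_commute)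
    have "p ! a1 = P x" using key[OF e1] x(2) i a1n n_def by simp
    moreover have "p ! a0 = P x" using key[OF e0] x(2) i a1n n_def by simp
    ultimately have "p ! a1 = p ! a0" by simp
    then show False using ne p(2) a1n n_def by (simp add: nth_eq_iff_index_eq)
  qed
  show ?thesis unfolding spanning_tree_def using TE conn acyc by simp
qed

definition TV :: "nat \<Rightarrow> (nat \<Rightarrow> nat) set" where
  "TV k = {f. (\<forall>i<k. f i < 4) \<and> (\<forall>i. k \<le> i \<longrightarrow> f i = 0)}"

definition up :: "(nat \<Rightarrow> nat) \<Rightarrow> nat \<Rightarrow> (nat \<Rightarrow> nat)" where
  "up f c = f(c := Suc (f c) mod 4)"

definition gb :: "nat \<Rightarrow> bool \<Rightarrow> bool" where
  "gb t b = (if b then t = 1 \<or> t = 2 else t = 2 \<or> t = 3)"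

definition gv :: "bool \<Rightarrow> bool \<Rightarrow> nat" where
  "gv b0 b1 = (if b0 then (if b1 then 2 else 3) else (if b1 then 1 else 0))"

definition enc :: "nat \<Rightarrow> (nat \<Rightarrow> nat) \<Rightarrow> bool list" where
  "enc k f = map (\<lambda>p. gb (f (p div 2)) (p mod 2 = 1)) [0..<2*k]"

definition dec :: "nat \<Rightarrow> bool list \<Rightarrow> (nat \<Rightarrow> nat)" where
  "dec k u = (\<lambda>i. if i < k then gv (u ! (2*i)) (u ! (2*i+1)) else 0)"

definition Eenc :: "nat \<Rightarrow> (nat \<Rightarrow> nat) \<times> nat \<Rightarrow> bool list set" where
  "Eenc k d = {enc k (fst d), enc k (up (fst d) (snd d))}"

definition Darts :: "nat \<Rightarrow> ((nat \<Rightarrow> nat) \<times> nat) set" where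
  "Darts k = {(f, c). f \<in> TV k \<and> c < k}"

lemma gv_gb: "t < 4 \<Longrightarrow> gv (gb t False) (gb t True) = t"
  by (auto simp: gv_def gb_def)

lemma gb_gv0: "gb (gv a b) False = a" and gb_gv1: "gb (gv a b) True = b"
  by (auto simp: gv_def gb_def)

lemma gv_lt: "gv a b < 4" by (simp add: gv_def)

lemma enc_nth: "p < 2*k \<Longrightarrow> enc k f ! p = gb (f (p div 2)) (p mod 2 = 1)"
  by (simp add: enc_def)

lemma enc_len[simp]: "length (enc k f) = 2*k"
  by (simp add: enc_def)

lemma enc_nth0: "i < k \<Longrightarrow> enc k f ! (2*i) = gb (f i) False"
  by (simp add: enc_nth)

lemma enc_nth1: "i < k \<Longrightarrow> enc k f ! (2*i+1) = gb (f i) True"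
  by (simp add: enc_nth)

lemma enc_nth1': "i < k \<Longrightarrow> enc k f ! Suc (2*i) = gb (f i) True"
  using enc_nth1 by simp

lemma dec_enc: "f \<in> TV k \<Longrightarrow> dec k (enc k f) = f"
  by (rule ext) (auto simp: dec_def enc_nth0 enc_nth1' gv_gb TV_def)

lemma enc_dec: "u \<in> hc_verts (2*k) \<Longrightarrow> enc k (dec k u) = u"
proof -
  assume u: "u \<in> hc_verts (2*k)"
  then have len: "length u = 2*k" by (simp add: hc_verts_def)
  show ?thesis
  proof (rule nth_equalityI)
    show "length (enc k (dec k u)) = length u" using len by simp
  next
    fix p assume "p < length (enc k (dec k u))"
    then have p: "p < 2*k" by simp
    then have pk: "p div 2 < k" by simp
    define q where "q = p div 2"
    have q: "q < k" using pk q_def by simp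
    have "p = 2 * q \<or> p = 2 * q + 1" using q_def by auto
    then show "enc k (dec k u) ! p = u ! p"
    proof
      assume pe: "p = 2 * q"
      have "enc k (dec k u) ! p = gb (dec k u q) False" using pe q by (simp add: enc_nth0)
      also have "\<dots> = u ! (2*q)" using q by (simp add: dec_def gb_gv0)
      finally show ?thesis using pe by simp
    next
      assume pe: "p = 2 * q + 1"
      have "enc k (dec k u) ! p = gb (dec k u q) True" using pe q by (simp add: enc_nth1')
      also have "\<dots> = u ! (2*q+1)" using q by (simp add: dec_def gb_gv1)
      finally show ?thesis using pe by simp
    qed
  qed
qed

lemma enc_in: "enc k f \<in> hc_verts (2*k)"
  by (simp add: hc_verts_def)

lemma dec_in: "dec k u \<in> TV k"
  by (simp add: TV_def dec_def gv_lt)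

lemma up_in: "f \<in> TV k \<Longrightarrow> c < k \<Longrightarrow> up f c \<in> TV k"
  by (simp add: TV_def up_def)

lemma enc_inj: "f \<in> TV k \<Longrightarrow> g \<in> TV k \<Longrightarrow> enc k f = enc k g \<Longrightarrow> f = g"
  by (metis dec_enc)

lemma up_ne: "up f c \<noteq> f"
proof
  assume "up f c = f"
  then have "Suc (f c) mod 4 = f c" unfolding up_def by (metis fun_upd_same)
  then show False by presburger
qed

lemma up_up_ne: "(\<forall>i. x i < 4) \<Longrightarrow> up (up x d) d' \<noteq> x"
proof
  assume x: "\<forall>i. x i < 4" and e: "up (up x d) d' = x"
  show False
  proof (cases "d = d'")
    case True
    then have "Suc (Suc (x d) mod 4) mod 4 = x d" using e unfolding up_def by (metis fun_upd_same)
    then show False using x by presburger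
  next
    case False
    then have "(up x d) d = x d" using e unfolding up_def by (metis fun_upd_other)
    then show False using up_ne[of x d] unfolding up_def
      by (metis fun_upd_idem_iff fun_upd_same)
  qed
qed

lemma four_cases: "(t::nat) < 4 \<Longrightarrow> t = 0 \<or> t = 1 \<or> t = 2 \<or> t = 3"
  by auto

lemma gb_diff: "t < 4 \<Longrightarrow> (gb t b \<noteq> gb (Suc t mod 4) b) \<longleftrightarrow> (b = (t = 0 \<or> t = 2))"
  by (drule four_cases) (cases b; auto simp: gb_def)

lemma adj_enc_up:
  assumes f: "f \<in> TV k" and c: "c < k"
  shows "hc_adj (enc k f) (enc k (up f c))"
proof -
  define b where "b = (if f c = 0 \<or> f c = 2 then 1 else 0::nat)"
  have fc: "f c < 4" using f c by (simp add: TV_def)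
  have S: "{p. p < length (enc k f) \<and> enc k f ! p \<noteq> enc k (up f c) ! p} = {2*c + b}"
  proof (rule set_eqI, rule iffI)
    fix p assume "p \<in> {p. p < length (enc k f) \<and> enc k f ! p \<noteq> enc k (up f c) ! p}"
    then have p: "p < 2*k" "enc k f ! p \<noteq> enc k (up f c) ! p" by auto
    then have "gb (f (p div 2)) (p mod 2 = 1) \<noteq> gb ((up f c) (p div 2)) (p mod 2 = 1)"
      by (simp add: enc_nth)
    then have pc: "p div 2 = c" and gg: "gb (f c) (p mod 2 = 1) \<noteq> gb (Suc (f c) mod 4) (p mod 2 = 1)"
      by (auto simp: up_def split: if_splits)
    have m: "(p mod 2 = 1) = (f c = 0 \<or> f c = 2)" using gg gb_diff[OF fc] by blast
    have "p = 2 * (p div 2) + p mod 2" by simp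
    then have "p = 2*c + b" using pc m unfolding b_def by (auto split: if_splits)
    then show "p \<in> {2*c + b}" by simp
  next
    fix p assume "p \<in> {2*c + b}"
    then have p: "p = 2*c + b" by simp
    have pk: "p < 2*k" using p c by (simp add: b_def)
    have pd: "p div 2 = c" using p by (simp add: b_def)
    have pm: "(p mod 2 = 1) = (f c = 0 \<or> f c = 2)" using p by (simp add: b_def)
    have "gb (f c) (p mod 2 = 1) \<noteq> gb (Suc (f c) mod 4) (p mod 2 = 1)"
      using gb_diff[OF fc] pm by blast
    then have "enc k f ! p \<noteq> enc k (up f c) ! p" using pk pd
      by (simp add: enc_nth up_def)
    then show "p \<in> {p. p < length (enc k f) \<and> enc k f ! p \<noteq> enc k (up f c) ! p}" using pk by simp
  qed
  show ?thesis unfolding hc_adj_def using S by simp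
qed

lemma Eenc_in: "d \<in> Darts k \<Longrightarrow> Eenc k d \<in> hc_edges (2*k)"
proof -
  assume d: "d \<in> Darts k"
  obtain f c where fc: "d = (f, c)" by (cases d)
  have f: "f \<in> TV k" "c < k" using d fc by (auto simp: Darts_def)
  have a: "hc_adj (enc k f) (enc k (up f c))" using adj_enc_up[OF f] .
  have "{enc k f, enc k (up f c)} \<in> hc_edges (2*k)"
    unfolding hc_edges_def using a enc_in by blast
  then show ?thesis using fc by (simp add: Eenc_def)
qed

lemma bit_cases:
  assumes "(a0 \<noteq> b0) \<noteq> (a1 \<noteq> b1)"
  shows "gv b0 b1 = Suc (gv a0 a1) mod 4 \<or> gv a0 a1 = Suc (gv b0 b1) mod 4"
  using assms by (cases a0; cases a1; cases b0; cases b1) (auto simp: gv_def)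

lemma hc_edge_dart:
  assumes u: "u \<in> hc_verts (2*k)" and v: "v \<in> hc_verts (2*k)" and adj: "hc_adj u v"
  shows "\<exists>d\<in>Darts k. {u, v} = Eenc k d"
proof -
  have lu: "length u = 2*k" and lv: "length v = 2*k" using u v by (auto simp: hc_verts_def)
  define S where "S = {i. i < length u \<and> u ! i \<noteq> v ! i}"
  from adj have "card S = 1" unfolding hc_adj_def S_def by (rule conjunct2)
  then obtain p where Sp: "S = {p}" by (rule card_1_singletonE)
  then have p: "p < 2*k" using lu by (auto simp: S_def)
  define c where "c = p div 2"
  have ck: "c < k" using p by (simp add: c_def)
  have memS: "i \<in> S \<longleftrightarrow> i < 2*k \<and> u ! i \<noteq> v ! i" for i using lu by (simp add: S_def)
  define f where "f = dec k u"
  define g where "g = dec k v"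
  have same: "f i = g i" if "i \<noteq> c" for i
  proof (cases "i < k")
    case True
    have "2*i \<noteq> p" "2*i+1 \<noteq> p" using that c_def by auto
    then have "2*i \<notin> S" "2*i+1 \<notin> S" using Sp by auto
    then have "u ! (2*i) = v ! (2*i)" "u ! (2*i+1) = v ! (2*i+1)" using True memS by auto
    then show ?thesis using True by (simp add: f_def g_def dec_def)
  next
    case False then show ?thesis by (simp add: f_def g_def dec_def)
  qed
  have "p = 2*c \<or> p = 2*c+1" using c_def by auto
  then have "(u ! (2*c) \<noteq> v ! (2*c)) \<noteq> (u ! (2*c+1) \<noteq> v ! (2*c+1))"
    using memS[of "2*c"] memS[of "2*c+1"] Sp ck by auto
  then have "g c = Suc (f c) mod 4 \<or> f c = Suc (g c) mod 4"
    using ck bit_cases by (simp add: f_def g_def dec_def)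
  then have gf: "g = up f c \<or> f = up g c"
    using same by (auto simp: up_def fun_eq_iff)
  have ue: "u = enc k f" and ve: "v = enc k g" using enc_dec u v by (auto simp: f_def g_def)
  have fT: "f \<in> TV k" and gT: "g \<in> TV k" by (auto simp: f_def g_def dec_in)
  from gf show ?thesis
  proof
    assume "g = up f c"
    then show ?thesis using fT ck ue ve by (intro bexI[of _ "(f, c)"]) (auto simp: Eenc_def Darts_def)
  next
    assume "f = up g c"
    then show ?thesis using gT ck ue ve by (intro bexI[of _ "(g, c)"]) (auto simp: Eenc_def Darts_def)
  qed
qed

lemma hc_edges_eq: "hc_edges (2*k) = Eenc k ` Darts k"
proof
  show "Eenc k ` Darts k \<subseteq> hc_edges (2*k)" using Eenc_in by blast
next
  show "hc_edges (2*k) \<subseteq> Eenc k ` Darts k"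
  proof
    fix e assume "e \<in> hc_edges (2*k)"
    then obtain u v where "e = {u, v}" "u \<in> hc_verts (2*k)" "v \<in> hc_verts (2*k)" "hc_adj u v"
      by (auto simp: hc_edges_def)
    then show "e \<in> Eenc k ` Darts k" using hc_edge_dart by blast
  qed
qed

lemma TV_lt4: "f \<in> TV k \<Longrightarrow> f i < 4"
  by (cases "i < k") (auto simp: TV_def)

lemma Eenc_inj: "inj_on (Eenc k) (Darts k)"
proof (rule inj_onI)
  fix d1 d2 assume d1: "d1 \<in> Darts k" and d2: "d2 \<in> Darts k" and e: "Eenc k d1 = Eenc k d2"
  obtain f c where d1e: "d1 = (f, c)" by (cases d1)
  obtain g c' where d2e: "d2 = (g, c')" by (cases d2)
  have fT: "f \<in> TV k" "c < k" "g \<in> TV k" "c' < k" using d1 d2 d1e d2e by (auto simp: Darts_def)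
  have uT: "up f c \<in> TV k" "up g c' \<in> TV k" using fT by (auto simp: up_in)
  have "{enc k f, enc k (up f c)} = {enc k g, enc k (up g c')}" using e d1e d2e by (simp add: Eenc_def)
  then have "(enc k f = enc k g \<and> enc k (up f c) = enc k (up g c')) \<or> (enc k f = enc k (up g c') \<and> enc k (up f c) = enc k g)"
    by (simp add: doubleton_eq_iff)
  then have "(f = g \<and> up f c = up g c') \<or> (f = up g c' \<and> up f c = g)"
    using enc_inj fT uT by metis
  then show "d1 = d2"
  proof
    assume a: "f = g \<and> up f c = up g c'"
    have "c = c'"
    proof (rule ccontr)
      assume "c \<noteq> c'"
      from a have "up f c = up f c'" by metis
      then have "(up f c) c = (up f c') c" by simp
      then have "(up f c) c = f c" by (simp add: up_def \<open>c \<noteq> c'\<close>)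
      then show False using up_ne[of f c] by (simp add: up_def fun_upd_idem_iff)
    qed
    then show ?thesis using a d1e d2e by simp
  next
    assume a: "f = up g c' \<and> up f c = g"
    then have a1: "f = up g c'" and a2: "up f c = g" by auto
    from a2 have "up (up g c') c = g" by (subst (asm) a1)
    moreover have "\<forall>i. g i < 4" using TV_lt4[OF fT(3)] by (intro allI)
    then have "up (up g c') c \<noteq> g" by (rule up_up_ne)
    ultimately show ?thesis by contradiction
  qed
qed

definition edge_of :: "(nat \<Rightarrow> nat) \<times> nat \<Rightarrow> (nat \<Rightarrow> nat) set" where
  "edge_of d = {fst d, up (fst d) (snd d)}"

definition Bundle :: "nat \<Rightarrow> (nat \<Rightarrow> nat) set \<Rightarrow> ((nat \<Rightarrow> nat) \<times> nat) set \<Rightarrow> ((nat \<Rightarrow> nat) \<Rightarrow> nat) \<Rightarrow> ((nat \<Rightarrow> nat) \<Rightarrow> nat) \<Rightarrow> ((nat \<Rightarrow> nat) \<times> nat) set" where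
  "Bundle c V' D' s q = {(g(c:=t), c) | g t. g \<in> V' \<and> t < 4 \<and> t \<noteq> s g} \<union> {(x(c := q x), d) | x d. (x, d) \<in> D'}"

definition IsTree :: "(nat \<Rightarrow> nat) set \<Rightarrow> ((nat \<Rightarrow> nat) \<times> nat) set \<Rightarrow> bool" where
  "IsTree V D \<longleftrightarrow> (\<exists>P r (h::(nat \<Rightarrow> nat) \<Rightarrow> nat). r \<in> V \<and> (\<forall>v\<in>V. v \<noteq> r \<longrightarrow> P v \<in> V \<and> h (P v) < h v)
      \<and> edge_of ` D = {{v, P v} | v. v \<in> V \<and> v \<noteq> r})"

definition posf :: "nat \<Rightarrow> nat \<Rightarrow> nat" where
  "posf s t = (t + 7 - s) mod 4"

definition distf :: "nat \<Rightarrow> nat \<Rightarrow> nat" where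
  "distf x y = (if x \<le> y then y - x else x - y)"

lemma posf_lt: "posf s t < 4" by (simp add: posf_def)

lemma distf_dec1: "A < T \<Longrightarrow> distf (T - 1) A < distf T A" by (auto simp: distf_def)
lemma distf_dec2: "T < A \<Longrightarrow> distf (Suc T) A < distf T A" by (auto simp: distf_def)

lemma distf_le3: "x < 4 \<Longrightarrow> y < 4 \<Longrightarrow> distf x y \<le> 3" by (auto simp: distf_def)

lemma posf_inj: "s < 4 \<Longrightarrow> t < 4 \<Longrightarrow> t' < 4 \<Longrightarrow> posf s t = posf s t' \<Longrightarrow> t = t'"
  using four_cases[of s] four_cases[of t] four_cases[of t'] by (auto simp: posf_def)

lemma posf_3: "s < 4 \<Longrightarrow> t < 4 \<Longrightarrow> posf s t = 3 \<longleftrightarrow> t = s"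
  using four_cases[of s] four_cases[of t] by (auto simp: posf_def)

lemma posf_suc: "s < 4 \<Longrightarrow> t < 4 \<Longrightarrow> posf s t \<le> 2 \<Longrightarrow> posf s (Suc t mod 4) = Suc (posf s t)"
  using four_cases[of s] four_cases[of t] by (auto simp: posf_def)

lemma posf_pred: "s < 4 \<Longrightarrow> t < 4 \<Longrightarrow> 1 \<le> posf s t \<Longrightarrow> posf s ((t + 3) mod 4) = posf s t - 1"
  using four_cases[of s] four_cases[of t] by (auto simp: posf_def)

lemma suc_pred4: "t < 4 \<Longrightarrow> (Suc t mod 4 + 3) mod 4 = t" using four_cases[of t] by auto
lemma pred_suc4: "t < 4 \<Longrightarrow> Suc ((t + 3) mod 4) mod 4 = t" using four_cases[of t] by auto

lemma up_upd: "d \<noteq> c \<Longrightarrow> up (x(c := a)) d = (up x d)(c := a)"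
  by (auto simp: up_def fun_eq_iff)

lemma up_upd_same: "up (g(c := t)) c = g(c := Suc t mod 4)"
  by (simp add: up_def)

lemma upd_cong: "{a, b} = {x, y} \<Longrightarrow> {a(c:=t), b(c:=t)} = {x(c:=t), y(c:=t)}"
proof -
  assume "{a, b} = {x, y}"
  then have "(a = x \<and> b = y) \<or> (a = y \<and> b = x)" by (simp add: doubleton_eq_iff)
  then show ?thesis by (elim disjE conjE) (simp_all add: insert_commute)
qed

lemma bundle_tree:
  assumes V'c: "\<And>g. g \<in> V' \<Longrightarrow> g c = 0 \<and> (\<forall>i. g i < 4)"
    and D'c: "\<And>x d. (x, d) \<in> D' \<Longrightarrow> d \<noteq> c"
    and s4: "\<And>g. s g < 4" and q4: "\<And>x. q x < 4"
    and T: "IsTree V' D'"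
  shows "IsTree {g(c:=t) | g t. g \<in> V' \<and> t < 4} (Bundle c V' D' s q)"
proof -
  obtain P' r' and h' :: "(nat \<Rightarrow> nat) \<Rightarrow> nat" where
    r': "r' \<in> V'" and P'a: "\<forall>v\<in>V'. v \<noteq> r' \<longrightarrow> P' v \<in> V' \<and> h' (P' v) < h' v"
    and E': "edge_of ` D' = {{v, P' v} | v. v \<in> V' \<and> v \<noteq> r'}"
    using T unfolding IsTree_def by (elim exE conjE) 
  have P': "P' v \<in> V' \<and> h' (P' v) < h' v" if "v \<in> V'" "v \<noteq> r'" for v
    using P'a that by blast
  define V where "V = {g(c:=t) | g t. g \<in> V' \<and> t < 4}"
  define lowerOf where "lowerOf g = (if \<exists>d. P' g = up g d then g else P' g)" for g
  define a where "a g = (if g = r' then Suc (s g) mod 4 else q (lowerOf g))" for g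
  define P where "P f = (if f c = a (f(c:=0)) then (P' (f(c:=0)))(c := f c)
     else f(c := (if posf (s (f(c:=0))) (a (f(c:=0))) < posf (s (f(c:=0))) (f c) then (f c + 3) mod 4 else Suc (f c) mod 4)))" for f
  define r where "r = r'(c := a r')"
  define h where "h f = 4 * h' (f(c:=0)) + distf (posf (s (f(c:=0))) (f c)) (posf (s (f(c:=0))) (a (f(c:=0))))" for f
  have a4: "a g < 4" for g using s4 q4 by (simp add: a_def)
  have upd0: "(g(c:=t))(c:=0) = g" if "g \<in> V'" for g t
    using V'c[OF that] by (auto simp: fun_eq_iff)
  have Vchar: "f \<in> V \<longleftrightarrow> f(c:=0) \<in> V' \<and> f c < 4" for f
  proof
    assume "f \<in> V"
    then obtain g t where "f = g(c:=t)" "g \<in> V'" "t < 4" by (auto simp: V_def)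
    then show "f(c:=0) \<in> V' \<and> f c < 4" using upd0 by auto
  next
    assume "f(c:=0) \<in> V' \<and> f c < 4"
    moreover have "f = (f(c:=0))(c := f c)" by simp
    ultimately show "f \<in> V" unfolding V_def by blast
  qed
  have lower: "lowerOf g = x" if g: "g \<in> V'" "g \<noteq> r'" and ge: "{g, P' g} = {x, up x d}" for g x d
  proof -
    have Pg: "P' g \<in> V'" using P' g by blast
    from ge have "(g = x \<and> P' g = up x d) \<or> (g = up x d \<and> P' g = x)" by (simp add: doubleton_eq_iff)
    then show ?thesis
    proof
      assume "g = x \<and> P' g = up x d"
      then show ?thesis unfolding lowerOf_def by auto
    next
      assume a1: "g = up x d \<and> P' g = x"
      have "\<not> (\<exists>d'. P' g = up g d')"
      proof
        assume "\<exists>d'. P' g = up g d'"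
        then obtain d' where "P' g = up g d'" by blast
        then have "up (up x d) d' = x" using a1 by metis
        moreover have "x \<in> V'" using Pg a1 by metis
        then have "\<forall>i. x i < 4" using V'c by blast
        ultimately show False using up_up_ne by blast
      qed
      then have "lowerOf g = P' g" unfolding lowerOf_def by simp
      then show ?thesis using a1 by metis
    qed
  qed
  have rV: "r \<in> V" unfolding Vchar r_def using r' upd0[OF r'] a4 by simp
  have Peq: "P (g(c:=t)) = (if t = a g then (P' g)(c := t) else g(c := (if posf (s g) (a g) < posf (s g) t then (t + 3) mod 4 else Suc t mod 4)))"
    if "g \<in> V'" for g t
    using upd0[OF that] by (simp add: P_def)
  have heq: "h (g(c:=t)) = 4 * h' g + distf (posf (s g) t) (posf (s g) (a g))" if "g \<in> V'" for g t
    using upd0[OF that] by (simp add: h_def)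
  have decr: "P v \<in> V \<and> h (P v) < h v" if v: "v \<in> V" "v \<noteq> r" for v
  proof -
    define g where "g = v(c:=0)"
    define t where "t = v c"
    have g: "g \<in> V'" "t < 4" using v Vchar g_def t_def by auto
    have ve: "v = g(c:=t)" by (simp add: g_def t_def)
    define A where "A = posf (s g) (a g)"
    define T where "T = posf (s g) t"
    have hv: "h v = 4 * h' g + distf T A" using heq[OF g(1)] ve by (simp add: T_def A_def)
    show ?thesis
    proof (cases "t = a g")
      case True
      then have gr: "g \<noteq> r'" using v(2) ve r_def by auto
      have Pv: "P v = (P' g)(c := t)" using True Peq[OF g(1)] ve by simp
      have PgV: "P' g \<in> V'" and hlt: "h' (P' g) < h' g" using P'[OF g(1) gr] by auto
      have "P v \<in> V" using Pv PgV g(2) Vchar upd0[OF PgV] by simp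
      moreover have "h (P v) < h v"
      proof -
        have "h (P v) = 4 * h' (P' g) + distf (posf (s (P' g)) t) (posf (s (P' g)) (a (P' g)))"
          using Pv heq[OF PgV] by simp
        also have "\<dots> \<le> 4 * h' (P' g) + 3"
          using distf_le3[OF posf_lt posf_lt] by simp
        also have "\<dots> < 4 * h' g" using hlt by simp
        finally show ?thesis using hv by simp
      qed
      ultimately show ?thesis ..
    next
      case False
      have TA: "T \<noteq> A" using False posf_inj[OF s4 g(2) a4] by (auto simp: T_def A_def)
      show ?thesis
      proof (cases "A < T")
        case True
        have Pv: "P v = g(c := (t + 3) mod 4)" using True False Peq[OF g(1)] ve
          by (simp add: A_def T_def)
        have T1: "posf (s g) ((t + 3) mod 4) = T - 1" using posf_pred[OF s4 g(2)] True by (simp add: T_def)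
        have "P v \<in> V" using Pv g Vchar upd0[OF g(1)] by simp
        moreover have "h (P v) = 4 * h' g + distf (T - 1) A"
          using Pv heq[OF g(1)] T1 by (simp add: A_def)
        then have "h (P v) < h v" using hv distf_dec1[OF True] by simp
        ultimately show ?thesis ..
      next
        case nAT: False
        then have AT: "T < A" using TA by simp
        have T2: "T \<le> 2" using AT posf_lt[of "s g" "a g"] by (simp add: A_def)
        have Pv: "P v = g(c := Suc t mod 4)" using nAT False Peq[OF g(1)] ve
          by (simp add: A_def T_def)
        have T1: "posf (s g) (Suc t mod 4) = Suc T" using posf_suc[OF s4 g(2)] T2 by (simp add: T_def)
        have "P v \<in> V" using Pv g Vchar upd0[OF g(1)] by simp
        moreover have "h (P v) = 4 * h' g + distf (Suc T) A"
          using Pv heq[OF g(1)] T1 by (simp add: A_def)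
        then have "h (P v) < h v" using hv distf_dec2[OF AT] by simp
        ultimately show ?thesis ..
      qed
    qed
  qed
  have ne_r: "g(c:=t) \<noteq> r" if "g \<in> V'" "g \<noteq> r' \<or> t \<noteq> a g" for g t
  proof
    assume "g(c:=t) = r"
    then have "(g(c:=t))(c:=0) = r(c:=0)" "(g(c:=t)) c = r c" by simp_all
    then have "g = r'" "t = a r'" using upd0[OF that(1)] upd0[OF r'] by (simp_all add: r_def)
    then show False using that(2) by simp
  qed
  have Eeq: "edge_of ` Bundle c V' D' s q = {{v, P v} | v. v \<in> V \<and> v \<noteq> r}"
  proof (rule set_eqI, rule iffI)
    fix e assume "e \<in> edge_of ` Bundle c V' D' s q"
    then obtain dd where dd: "dd \<in> Bundle c V' D' s q" "e = edge_of dd" by blast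
    from dd(1) consider (L0) g t where "g \<in> V'" "t < 4" "t \<noteq> s g" "dd = (g(c:=t), c)"
      | (L1) x d where "(x,d) \<in> D'" "dd = (x(c := q x), d)"
      unfolding Bundle_def by blast
    then show "e \<in> {{v, P v} | v. v \<in> V \<and> v \<noteq> r}"
    proof cases
      case L0
      define T where "T = posf (s g) t"
      define A where "A = posf (s g) (a g)"
      define u where "u = Suc t mod 4"
      have u4: "u < 4" by (simp add: u_def)
      have "T \<noteq> 3" using posf_3[OF s4 L0(2)] L0(3) T_def by simp
      then have T2: "T \<le> 2" using posf_lt[of "s g" t] T_def by simp
      have Tu: "posf (s g) u = Suc T" using posf_suc[OF s4 L0(2)] T2 by (simp add: T_def u_def)
      have ee: "e = {g(c:=t), g(c:=u)}" using dd(2) L0(4) by (simp add: edge_of_def up_upd_same u_def)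
      show ?thesis
      proof (cases "A \<le> T")
        case True
        define v where "v = g(c:=u)"
        have vV: "v \<in> V" using Vchar upd0[OF L0(1)] L0(1) u4 v_def by simp
        have ua: "u \<noteq> a g" using True Tu A_def by auto
        have vr: "v \<noteq> r" using ne_r[OF L0(1)] ua v_def by blast
        have "P v = g(c := (u + 3) mod 4)" using Peq[OF L0(1), of u] ua True Tu by (simp add: v_def A_def)
        then have "P v = g(c := t)" using suc_pred4[OF L0(2)] u_def by simp
        then have "e = {v, P v}" using ee v_def by (simp add: insert_commute)
        then show ?thesis using vV vr by blast
      next
        case False
        define v where "v = g(c:=t)"
        have vV: "v \<in> V" using Vchar upd0[OF L0(1)] L0(1) L0(2) v_def by simp
        have ta: "t \<noteq> a g" using False A_def T_def by auto
        have vr: "v \<noteq> r" using ne_r[OF L0(1)] ta v_def by blast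
        have "P v = g(c := u)" using Peq[OF L0(1), of t] ta False by (simp add: v_def A_def T_def u_def)
        then have "e = {v, P v}" using ee v_def by simp
        then show ?thesis using vV vr by blast
      qed
    next
      case L1
      have dc: "d \<noteq> c" using D'c L1(1) by blast
      have "edge_of (x, d) \<in> edge_of ` D'" using L1(1) by blast
      then have "{x, up x d} \<in> {{v, P' v} | v. v \<in> V' \<and> v \<noteq> r'}" using E' by (simp add: edge_of_def)
      then obtain v' where v': "{x, up x d} = {v', P' v'}" "v' \<in> V'" "v' \<noteq> r'" by blast
      have lo: "lowerOf v' = x" using lower[OF v'(2) v'(3) v'(1)[symmetric]] .
      have av: "a v' = q x" using lo v'(3) by (simp add: a_def)
      define v where "v = v'(c := q x)"
      have vV: "v \<in> V" using Vchar upd0[OF v'(2)] v'(2) q4 v_def by simp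
      have vr: "v \<noteq> r" using ne_r[OF v'(2)] v'(3) v_def by blast
      have Pv: "P v = (P' v')(c := q x)" using Peq[OF v'(2), of "q x"] av v_def by simp
      have "e = {x(c := q x), (up x d)(c := q x)}" using dd(2) L1(2) up_upd[OF dc] by (simp add: edge_of_def)
      also have "\<dots> = {v, P v}" using upd_cong[OF v'(1)] Pv v_def by simp
      finally show ?thesis using vV vr by blast
    qed
  next
    fix e assume "e \<in> {{v, P v} | v. v \<in> V \<and> v \<noteq> r}"
    then obtain v where v: "e = {v, P v}" "v \<in> V" "v \<noteq> r" by blast
    define g where "g = v(c:=0)"
    define t where "t = v c"
    have g: "g \<in> V'" "t < 4" using v Vchar g_def t_def by auto
    have ve: "v = g(c:=t)" by (simp add: g_def t_def)
    define A where "A = posf (s g) (a g)"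
    define T where "T = posf (s g) t"
    show "e \<in> edge_of ` Bundle c V' D' s q"
    proof (cases "t = a g")
      case True
      then have gr: "g \<noteq> r'" using v(3) ve r_def by auto
      have "{g, P' g} \<in> edge_of ` D'" using E' g(1) gr by blast
      then obtain xd where xd0: "xd \<in> D'" "{g, P' g} = edge_of xd" by blast
      obtain x d where xde: "xd = (x, d)" by (cases xd)
      have xd: "(x, d) \<in> D'" "{g, P' g} = {x, up x d}" using xd0 xde by (simp_all add: edge_of_def)
      have dc: "d \<noteq> c" using D'c xd(1) by blast
      have lo: "lowerOf g = x" using lower[OF g(1) gr xd(2)] .
      have av: "a g = q x" using lo gr by (simp add: a_def)
      have Pv: "P v = (P' g)(c := t)" using True Peq[OF g(1)] ve by simp
      have "(x(c := q x), d) \<in> Bundle c V' D' s q" using xd(1) unfolding Bundle_def by blast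
      moreover have "edge_of (x(c := q x), d) = e"
      proof -
        have "edge_of (x(c := q x), d) = {x(c := q x), (up x d)(c := q x)}"
          using up_upd[OF dc] by (simp add: edge_of_def)
        also have "\<dots> = {g(c := q x), (P' g)(c := q x)}" using upd_cong[OF xd(2)[symmetric]] .
        also have "\<dots> = e" using v(1) ve Pv True av by simp
        finally show ?thesis .
      qed
      ultimately show ?thesis by (metis image_eqI)
    next
      case False
      have TA: "T \<noteq> A" using False posf_inj[OF s4 g(2) a4] by (auto simp: T_def A_def)
      show ?thesis
      proof (cases "A < T")
        case True
        define t' where "t' = (t + 3) mod 4"
        have t'4: "t' < 4" by (simp add: t'_def)
        have T1: "posf (s g) t' = T - 1" using posf_pred[OF s4 g(2)] True by (simp add: T_def t'_def)
        have "posf (s g) t' \<noteq> 3" using T1 posf_lt[of "s g" t] T_def by simp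
        then have ts: "t' \<noteq> s g" using posf_3[OF s4 t'4] by simp
        have Pv: "P v = g(c := t')" using True False Peq[OF g(1)] ve by (simp add: A_def T_def t'_def)
        have "(g(c:=t'), c) \<in> Bundle c V' D' s q" using g(1) t'4 ts unfolding Bundle_def by blast
        moreover have "edge_of (g(c:=t'), c) = e"
          using v(1) Pv ve pred_suc4[OF g(2)] by (simp add: edge_of_def up_upd_same t'_def insert_commute)
        ultimately show ?thesis by (metis image_eqI)
      next
        case nAT: False
        then have AT: "T < A" using TA by simp
        have T2: "T \<le> 2" using AT posf_lt[of "s g" "a g"] by (simp add: A_def)
        then have ts: "t \<noteq> s g" using posf_3[OF s4[of g] g(2)] T_def by auto
        have Pv: "P v = g(c := Suc t mod 4)" using nAT False Peq[OF g(1)] ve by (simp add: A_def T_def)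
        have "(g(c:=t), c) \<in> Bundle c V' D' s q" using g ts unfolding Bundle_def by blast
        moreover have "edge_of (g(c:=t), c) = e"
          using v(1) Pv ve by (simp add: edge_of_def up_upd_same)
        ultimately show ?thesis by (metis image_eqI)
      qed
    qed
  qed
  show ?thesis unfolding IsTree_def
    by (rule exI[of _ P], rule exI[of _ r], rule exI[of _ h]) (use rV decr Eeq V_def in auto)
qed

definition Vs :: "nat list \<Rightarrow> (nat \<Rightarrow> nat) set" where
  "Vs \<sigma> = {f. \<forall>i. (i \<in> set \<sigma> \<longrightarrow> f i < 4) \<and> (i \<notin> set \<sigma> \<longrightarrow> f i = 0)}"

definition Ch :: "nat list \<Rightarrow> nat list \<Rightarrow> (nat \<Rightarrow> nat) \<Rightarrow> nat \<Rightarrow> bool" where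
  "Ch \<sigma> \<epsilon> f l \<longleftrightarrow> (\<forall>m<l. f (\<sigma>!m) = (f (\<sigma>!Suc m) + \<epsilon>!Suc m) mod 4)"

definition Sk :: "nat list \<Rightarrow> nat list \<Rightarrow> nat \<Rightarrow> (nat \<Rightarrow> nat) \<Rightarrow> nat \<Rightarrow> bool" where
  "Sk \<sigma> \<epsilon> \<rho> f l \<longleftrightarrow> (Suc l < length \<sigma> \<longrightarrow> f (last \<sigma>) \<noteq> (f (\<sigma>!0) + \<epsilon>!0) mod 4)
      \<and> (Suc l = length \<sigma> \<longrightarrow> f (last \<sigma>) \<noteq> \<rho>)"

definition OwnC :: "nat list \<Rightarrow> nat list \<Rightarrow> nat \<Rightarrow> ((nat \<Rightarrow> nat) \<times> nat) set" where
  "OwnC \<sigma> \<epsilon> \<rho> = {(f, i). f \<in> Vs \<sigma> \<and> (\<exists>l<length \<sigma>. i = \<sigma>!l \<and> Ch \<sigma> \<epsilon> f l \<and> Sk \<sigma> \<epsilon> \<rho> f l)}"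

lemma Vs_lt4: "f \<in> Vs \<sigma> \<Longrightarrow> f i < 4"
  by (cases "i \<in> set \<sigma>") (auto simp: Vs_def)

lemma Vs_nil: "Vs [] = {\<lambda>_. 0}"
  by (auto simp: Vs_def)

lemma Vs_cons: "c \<notin> set \<sigma> \<Longrightarrow> Vs (c # \<sigma>) = {g(c:=t) | g t. g \<in> Vs \<sigma> \<and> t < 4}"
proof (rule set_eqI, rule iffI)
  fix f assume c: "c \<notin> set \<sigma>" and f: "f \<in> Vs (c # \<sigma>)"
  have "f(c:=0) \<in> Vs \<sigma>" using f c by (auto simp: Vs_def)
  moreover have "f c < 4" using f by (simp add: Vs_def)
  moreover have "f = (f(c:=0))(c := f c)" by simp
  ultimately show "f \<in> {g(c:=t) | g t. g \<in> Vs \<sigma> \<and> t < 4}" by blast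
next
  fix f assume c: "c \<notin> set \<sigma>" and "f \<in> {g(c:=t) | g t. g \<in> Vs \<sigma> \<and> t < 4}"
  then obtain g t where "f = g(c:=t)" "g \<in> Vs \<sigma>" "t < 4" by blast
  then show "f \<in> Vs (c # \<sigma>)" using c by (auto simp: Vs_def)
qed

lemma tree_nil: "IsTree (Vs []) {}"
  unfolding IsTree_def Vs_nil
  by (rule exI[of _ id], rule exI[of _ "\<lambda>_. 0"], rule exI[of _ "\<lambda>_. 0::nat"]) auto

lemma four_arith1: "(L::nat) < 4 \<Longrightarrow> e < 4 \<Longrightarrow> t < 4 \<Longrightarrow> (t = (L + 4 - e) mod 4) = (L = (t + e) mod 4)"
  apply (drule four_cases)+
  apply (elim disjE)
  apply simp_all
  done

lemma four_arith2: "(((a::nat) + e1) mod 4 + e0) mod 4 = (a + (e0 + e1) mod 4) mod 4"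
  by (simp add: mod_add_left_eq mod_add_right_eq ac_simps)

lemma own_base: "OwnC [c] [e] \<rho> = Bundle c (Vs []) {} (\<lambda>_. \<rho>) (\<lambda>_. 0)"
proof (rule set_eqI)
  fix z :: "(nat \<Rightarrow> nat) \<times> nat"
  obtain f i where z: "z = (f, i)" by (cases z)
  have "z \<in> OwnC [c] [e] \<rho> \<longleftrightarrow> f \<in> Vs [c] \<and> i = c \<and> f c \<noteq> \<rho>"
    by (auto simp: z OwnC_def Ch_def Sk_def)
  also have "\<dots> \<longleftrightarrow> z \<in> Bundle c (Vs []) {} (\<lambda>_. \<rho>) (\<lambda>_. 0)"
  proof
    assume a: "f \<in> Vs [c] \<and> i = c \<and> f c \<noteq> \<rho>"
    then have "f = (\<lambda>_. 0)(c := f c)" "f c < 4" by (auto simp: Vs_def fun_eq_iff)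
    then show "z \<in> Bundle c (Vs []) {} (\<lambda>_. \<rho>) (\<lambda>_. 0)" using a unfolding Bundle_def Vs_nil z by blast
  next
    assume "z \<in> Bundle c (Vs []) {} (\<lambda>_. \<rho>) (\<lambda>_. 0)"
    then obtain t where "f = (\<lambda>_. 0)(c := t)" "t < 4" "t \<noteq> \<rho>" "i = c" unfolding Bundle_def Vs_nil z by blast
    then show "f \<in> Vs [c] \<and> i = c \<and> f c \<noteq> \<rho>" by (auto simp: Vs_def)
  qed
  finally show "z \<in> OwnC [c] [e] \<rho> \<longleftrightarrow> z \<in> Bundle c (Vs []) {} (\<lambda>_. \<rho>) (\<lambda>_. 0)" .
qed

lemma Bundle_mem:
  assumes V0: "\<And>g. g \<in> V' \<Longrightarrow> g c = 0" and D0: "\<And>x d. (x, d) \<in> D' \<Longrightarrow> x c = 0"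
  shows "(f, i) \<in> Bundle c V' D' s q \<longleftrightarrow>
    (i = c \<and> f(c:=0) \<in> V' \<and> f c < 4 \<and> f c \<noteq> s (f(c:=0))) \<or> (f c = q (f(c:=0)) \<and> (f(c:=0), i) \<in> D')"
proof
  assume "(f, i) \<in> Bundle c V' D' s q"
  then consider (L0) g t where "g \<in> V'" "t < 4" "t \<noteq> s g" "f = g(c:=t)" "i = c"
    | (L1) x where "(x, i) \<in> D'" "f = x(c := q x)"
    unfolding Bundle_def by blast
  then show "(i = c \<and> f(c:=0) \<in> V' \<and> f c < 4 \<and> f c \<noteq> s (f(c:=0))) \<or> (f c = q (f(c:=0)) \<and> (f(c:=0), i) \<in> D')"
  proof cases
    case L0
    have "f(c:=0) = g" using L0(4) V0[OF L0(1)] by (auto simp: fun_eq_iff)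
    then show ?thesis using L0 by simp
  next
    case L1
    have "f(c:=0) = x" using L1(2) D0[OF L1(1)] by (auto simp: fun_eq_iff)
    then show ?thesis using L1 by simp
  qed
next
  assume "(i = c \<and> f(c:=0) \<in> V' \<and> f c < 4 \<and> f c \<noteq> s (f(c:=0))) \<or> (f c = q (f(c:=0)) \<and> (f(c:=0), i) \<in> D')"
  then show "(f, i) \<in> Bundle c V' D' s q"
  proof
    assume a: "i = c \<and> f(c:=0) \<in> V' \<and> f c < 4 \<and> f c \<noteq> s (f(c:=0))"
    have "f = (f(c:=0))(c := f c)" by simp
    then show ?thesis using a unfolding Bundle_def by blast
  next
    assume a: "f c = q (f(c:=0)) \<and> (f(c:=0), i) \<in> D'"
    have "f = (f(c:=0))(c := q (f(c:=0)))" using a by (simp add: fun_eq_iff)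
    then show ?thesis using a unfolding Bundle_def by blast
  qed
qed

lemma OwnC_Vs: "(x, d) \<in> OwnC \<sigma> \<epsilon> \<rho> \<Longrightarrow> x \<in> Vs \<sigma>"
  by (simp add: OwnC_def)

lemma OwnC_dir: "(x, d) \<in> OwnC \<sigma> \<epsilon> \<rho> \<Longrightarrow> d \<in> set \<sigma>"
  by (auto simp: OwnC_def)

lemma own_step:
  assumes dist: "distinct (c # c' # \<tau>)" and e0: "e0 < 4"
  shows "OwnC (c # c' # \<tau>) (e0 # e1 # \<eta>) \<rho> = Bundle c (Vs (c' # \<tau>)) (OwnC (c' # \<tau>) (((e0 + e1) mod 4) # \<eta>) \<rho>)
            (\<lambda>g. (g (last (c' # \<tau>)) + 4 - e0) mod 4) (\<lambda>x. (x c' + e1) mod 4)"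
proof (rule set_eqI)
  fix z :: "(nat \<Rightarrow> nat) \<times> nat"
  obtain f i where z: "z = (f, i)" by (cases z)
  define \<sigma> where "\<sigma> = c # c' # \<tau>"
  define \<sigma>' where "\<sigma>' = c' # \<tau>"
  define \<epsilon> where "\<epsilon> = e0 # e1 # \<eta>"
  define \<epsilon>' where "\<epsilon>' = ((e0 + e1) mod 4) # \<eta>"
  have cn: "c \<notin> set \<sigma>'" using dist by (simp add: \<sigma>'_def)
  have ls: "last \<sigma> = last \<sigma>'" by (simp add: \<sigma>_def \<sigma>'_def)
  have lc: "last \<sigma>' \<noteq> c" using cn last_in_set[of \<sigma>'] by (auto simp: \<sigma>'_def)
  have len: "length \<sigma> = Suc (length \<sigma>')" by (simp add: \<sigma>_def \<sigma>'_def)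
  have Vsig: "f \<in> Vs \<sigma> \<longleftrightarrow> f(c:=0) \<in> Vs \<sigma>' \<and> f c < 4"
  proof
    assume f: "f \<in> Vs \<sigma>"
    have "(f(c:=0)) i < 4" if "i \<in> set \<sigma>'" for i
      using f that cn by (auto simp: Vs_def \<sigma>_def \<sigma>'_def)
    moreover have "(f(c:=0)) i = 0" if "i \<notin> set \<sigma>'" for i
      using f that by (cases "i = c") (auto simp: Vs_def \<sigma>_def \<sigma>'_def)
    ultimately have "f(c:=0) \<in> Vs \<sigma>'" unfolding Vs_def by blast
    moreover have "f c < 4" using f by (simp add: Vs_def \<sigma>_def)
    ultimately show "f(c:=0) \<in> Vs \<sigma>' \<and> f c < 4" by blast
  next
    assume a: "f(c:=0) \<in> Vs \<sigma>' \<and> f c < 4"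
    have "f i < 4" if "i \<in> set \<sigma>" for i
    proof (cases "i = c")
      case True then show ?thesis using a by simp
    next
      case False
      then have "i \<in> set \<sigma>'" using that by (simp add: \<sigma>_def \<sigma>'_def)
      then show ?thesis using a False Vs_lt4[of "f(c:=0)" \<sigma>' i] by simp
    qed
    moreover have "f i = 0" if "i \<notin> set \<sigma>" for i
    proof -
      have ic: "i \<noteq> c" and is': "i \<notin> set \<sigma>'" using that by (auto simp: \<sigma>_def \<sigma>'_def)
      have "(f(c:=0)) i = 0" using a is' unfolding Vs_def by blast
      then show ?thesis using ic by simp
    qed
    ultimately show "f \<in> Vs \<sigma>" unfolding Vs_def by blast
  qed
  have x_on: "(f(c:=0)) j = f j" if "j \<in> set \<sigma>'" for j using that cn by auto
  have Ch_Suc: "Ch \<sigma> \<epsilon> f (Suc l') \<longleftrightarrow> f c = (f c' + e1) mod 4 \<and> Ch \<sigma>' \<epsilon>' (f(c:=0)) l'"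
    if l'l: "l' < length \<sigma>'" for l'
  proof -
    have "Ch \<sigma> \<epsilon> f (Suc l') \<longleftrightarrow> f c = (f c' + e1) mod 4 \<and> (\<forall>m<l'. f (\<sigma>!Suc m) = (f (\<sigma>!Suc (Suc m)) + \<epsilon>!Suc (Suc m)) mod 4)"
      unfolding Ch_def All_less_Suc2 by (simp add: \<sigma>_def \<epsilon>_def)
    also have "(\<forall>m<l'. f (\<sigma>!Suc m) = (f (\<sigma>!Suc (Suc m)) + \<epsilon>!Suc (Suc m)) mod 4) \<longleftrightarrow> Ch \<sigma>' \<epsilon>' (f(c:=0)) l'"
    proof -
      have eqm: "(f (\<sigma>!Suc m) = (f (\<sigma>!Suc (Suc m)) + \<epsilon>!Suc (Suc m)) mod 4) =
          ((f(c:=0)) (\<sigma>'!m) = ((f(c:=0)) (\<sigma>'!Suc m) + \<epsilon>'!Suc m) mod 4)" if m: "m < l'" for m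
      proof -
        have "\<sigma>'!m \<in> set \<sigma>'" "\<sigma>'!Suc m \<in> set \<sigma>'" using m l'l by (auto intro!: nth_mem)
        then have "(f(c:=0)) (\<sigma>'!m) = f (\<sigma>'!m)" "(f(c:=0)) (\<sigma>'!Suc m) = f (\<sigma>'!Suc m)"
          using x_on by blast+
        moreover have "\<sigma>!Suc m = \<sigma>'!m" "\<sigma>!Suc (Suc m) = \<sigma>'!Suc m" "\<epsilon>!Suc (Suc m) = \<epsilon>'!Suc m"
          by (simp_all add: \<sigma>_def \<sigma>'_def \<epsilon>_def \<epsilon>'_def)
        ultimately show ?thesis by simp
      qed
      show ?thesis unfolding Ch_def using eqm by blast
    qed
    finally show ?thesis .
  qed
  have Sk_Suc: "Sk \<sigma> \<epsilon> \<rho> f (Suc l') \<longleftrightarrow> Sk \<sigma>' \<epsilon>' \<rho> (f(c:=0)) l'"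
    if "f c = (f c' + e1) mod 4" for l'
  proof -
    have "(f c + e0) mod 4 = (f c' + (e0 + e1) mod 4) mod 4" using that four_arith2 by simp
    moreover have "(f(c:=0)) (last \<sigma>') = f (last \<sigma>')" using lc by simp
    moreover have "(f(c:=0)) c' = f c'" using cn by (auto simp: \<sigma>'_def)
    ultimately show ?thesis unfolding Sk_def using ls len by (simp add: \<sigma>_def \<sigma>'_def \<epsilon>_def \<epsilon>'_def)
  qed
  have Sk_0: "Sk \<sigma> \<epsilon> \<rho> f 0 \<longleftrightarrow> f (last \<sigma>') \<noteq> (f c + e0) mod 4"
    unfolding Sk_def using ls by (simp add: \<sigma>_def \<epsilon>_def)
  have Ch_0: "Ch \<sigma> \<epsilon> f 0" by (simp add: Ch_def)
  have "z \<in> OwnC \<sigma> \<epsilon> \<rho> \<longleftrightarrow> f \<in> Vs \<sigma> \<and> ((i = c \<and> f (last \<sigma>') \<noteq> (f c + e0) mod 4)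
       \<or> (f c = (f c' + e1) mod 4 \<and> (f(c:=0), i) \<in> OwnC \<sigma>' \<epsilon>' \<rho>))"
  proof -
    have "z \<in> OwnC \<sigma> \<epsilon> \<rho> \<longleftrightarrow> f \<in> Vs \<sigma> \<and> (\<exists>l<Suc (length \<sigma>'). i = \<sigma>!l \<and> Ch \<sigma> \<epsilon> f l \<and> Sk \<sigma> \<epsilon> \<rho> f l)"
      by (simp add: z OwnC_def len)
    also have "(\<exists>l<Suc (length \<sigma>'). i = \<sigma>!l \<and> Ch \<sigma> \<epsilon> f l \<and> Sk \<sigma> \<epsilon> \<rho> f l) \<longleftrightarrow>
       (i = c \<and> f (last \<sigma>') \<noteq> (f c + e0) mod 4) \<or> (\<exists>l'<length \<sigma>'. i = \<sigma>'!l' \<and> Ch \<sigma> \<epsilon> f (Suc l') \<and> Sk \<sigma> \<epsilon> \<rho> f (Suc l'))"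
      unfolding Ex_less_Suc2 using Sk_0 Ch_0 by (simp add: \<sigma>_def \<sigma>'_def)
    also have "(\<exists>l'<length \<sigma>'. i = \<sigma>'!l' \<and> Ch \<sigma> \<epsilon> f (Suc l') \<and> Sk \<sigma> \<epsilon> \<rho> f (Suc l')) \<longleftrightarrow>
       (f c = (f c' + e1) mod 4 \<and> (\<exists>l'<length \<sigma>'. i = \<sigma>'!l' \<and> Ch \<sigma>' \<epsilon>' (f(c:=0)) l' \<and> Sk \<sigma>' \<epsilon>' \<rho> (f(c:=0)) l'))"
      using Ch_Suc Sk_Suc by blast
    finally show ?thesis using Vsig by (auto simp: OwnC_def)
  qed
  also have "\<dots> \<longleftrightarrow> z \<in> Bundle c (Vs \<sigma>') (OwnC \<sigma>' \<epsilon>' \<rho>) (\<lambda>g. (g (last \<sigma>') + 4 - e0) mod 4) (\<lambda>x. (x c' + e1) mod 4)"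
  proof -
    have V0: "g \<in> Vs \<sigma>' \<Longrightarrow> g c = 0" for g using cn by (simp add: Vs_def)
    have D0: "(x, d) \<in> OwnC \<sigma>' \<epsilon>' \<rho> \<Longrightarrow> x c = 0" for x d using V0 OwnC_Vs by blast
    have fl: "(f(c:=0)) (last \<sigma>') = f (last \<sigma>')" using lc by simp
    have fc': "(f(c:=0)) c' = f c'" using cn by (auto simp: \<sigma>'_def)
    have fl4: "f (last \<sigma>') < 4" if "f(c:=0) \<in> Vs \<sigma>'" using Vs_lt4[OF that, of "last \<sigma>'"] fl by simp
    have A: "f \<in> Vs \<sigma> \<and> i = c \<and> f (last \<sigma>') \<noteq> (f c + e0) mod 4 \<longleftrightarrow>
       i = c \<and> f(c:=0) \<in> Vs \<sigma>' \<and> f c < 4 \<and> f c \<noteq> ((f(c:=0)) (last \<sigma>') + 4 - e0) mod 4"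
      using Vsig fl fl4 four_arith1[of "f (last \<sigma>')" e0 "f c"] e0 by auto
    have B: "f \<in> Vs \<sigma> \<and> f c = (f c' + e1) mod 4 \<and> (f(c:=0), i) \<in> OwnC \<sigma>' \<epsilon>' \<rho> \<longleftrightarrow>
       f c = ((f(c:=0)) c' + e1) mod 4 \<and> (f(c:=0), i) \<in> OwnC \<sigma>' \<epsilon>' \<rho>"
      using Vsig fc' OwnC_Vs by auto
    have BM: "(f, i) \<in> Bundle c (Vs \<sigma>') (OwnC \<sigma>' \<epsilon>' \<rho>) (\<lambda>g. (g (last \<sigma>') + 4 - e0) mod 4) (\<lambda>x. (x c' + e1) mod 4)
      \<longleftrightarrow> (i = c \<and> f(c:=0) \<in> Vs \<sigma>' \<and> f c < 4 \<and> f c \<noteq> ((f(c:=0)) (last \<sigma>') + 4 - e0) mod 4)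
        \<or> (f c = ((f(c:=0)) c' + e1) mod 4 \<and> (f(c:=0), i) \<in> OwnC \<sigma>' \<epsilon>' \<rho>)"
      by (rule Bundle_mem) (auto intro: V0 D0)
    show ?thesis unfolding z BM using A B by blast
  qed
  finally show "z \<in> OwnC (c # c' # \<tau>) (e0 # e1 # \<eta>) \<rho> \<longleftrightarrow> z \<in> Bundle c (Vs (c' # \<tau>)) (OwnC (c' # \<tau>) (((e0 + e1) mod 4) # \<eta>) \<rho>)
            (\<lambda>g. (g (last (c' # \<tau>)) + 4 - e0) mod 4) (\<lambda>x. (x c' + e1) mod 4)"
    by (simp add: \<sigma>_def \<sigma>'_def \<epsilon>_def \<epsilon>'_def)
qed


lemma own_tree:
  "distinct \<sigma> \<Longrightarrow> \<sigma> \<noteq> [] \<Longrightarrow> length \<epsilon> = length \<sigma> \<Longrightarrow> (\<forall>e\<in>set \<epsilon>. e < 4) \<Longrightarrow> \<rho> < 4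
    \<Longrightarrow> IsTree (Vs \<sigma>) (OwnC \<sigma> \<epsilon> \<rho>)"
proof (induction \<sigma> arbitrary: \<epsilon> rule: induct_list012)
  case 1
  then show ?case by simp
next
  case (2 c)
  then obtain e where ee: "\<epsilon> = [e]" by (cases \<epsilon>) auto
  have O: "OwnC [c] \<epsilon> \<rho> = Bundle c (Vs []) {} (\<lambda>_. \<rho>) (\<lambda>_. 0)" using own_base ee by simp
  have V: "Vs [c] = {g(c:=t) | g t. g \<in> Vs [] \<and> t < 4}" using Vs_cons[of c "[]"] by simp
  have "IsTree {g(c:=t) | g t. g \<in> Vs [] \<and> t < 4} (Bundle c (Vs []) {} (\<lambda>_. \<rho>) (\<lambda>_. 0))"
  proof (rule bundle_tree)
    show "g c = 0 \<and> (\<forall>i. g i < 4)" if "g \<in> Vs []" for g using that by (simp add: Vs_nil)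
  qed (use 2 tree_nil in auto)
  then show ?case using O V by simp
next
  case (3 c c' \<tau>)
  obtain e0 e1 \<eta> where ee: "\<epsilon> = e0 # e1 # \<eta>" using "3.prems"(3)
    by (cases \<epsilon>; cases "tl \<epsilon>") auto
  have e0: "e0 < 4" and e1: "e1 < 4" and eta: "\<forall>e\<in>set \<eta>. e < 4" using "3.prems"(4) ee by auto
  define \<epsilon>' where "\<epsilon>' = ((e0 + e1) mod 4) # \<eta>"
  have IH: "IsTree (Vs (c' # \<tau>)) (OwnC (c' # \<tau>) \<epsilon>' \<rho>)"
    using "3.IH"(2)[of \<epsilon>'] "3.prems" ee eta by (simp add: \<epsilon>'_def)
  have cn: "c \<notin> set (c' # \<tau>)" using "3.prems"(1) by simp
  have O: "OwnC (c # c' # \<tau>) \<epsilon> \<rho> = Bundle c (Vs (c' # \<tau>)) (OwnC (c' # \<tau>) \<epsilon>' \<rho>)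
            (\<lambda>g. (g (last (c' # \<tau>)) + 4 - e0) mod 4) (\<lambda>x. (x c' + e1) mod 4)"
    using own_step[OF "3.prems"(1) e0] ee by (simp add: \<epsilon>'_def)
  have V: "Vs (c # c' # \<tau>) = {g(c:=t) | g t. g \<in> Vs (c' # \<tau>) \<and> t < 4}" using Vs_cons[OF cn] .
  have "IsTree {g(c:=t) | g t. g \<in> Vs (c' # \<tau>) \<and> t < 4} (Bundle c (Vs (c' # \<tau>)) (OwnC (c' # \<tau>) \<epsilon>' \<rho>)
            (\<lambda>g. (g (last (c' # \<tau>)) + 4 - e0) mod 4) (\<lambda>x. (x c' + e1) mod 4))"
  proof (rule bundle_tree)
    show "g c = 0 \<and> (\<forall>i. g i < 4)" if "g \<in> Vs (c' # \<tau>)" for g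
      using that cn Vs_lt4[OF that] by (simp add: Vs_def)
    show "d \<noteq> c" if "(x, d) \<in> OwnC (c' # \<tau>) \<epsilon>' \<rho>" for x d
      using OwnC_dir[OF that] cn by blast
  qed (use IH in auto)
  then show ?case using O V by simp
qed

lemma mod2k: "(x::nat) < 2*k \<Longrightarrow> x mod k = (if x < k then x else x - k)"
proof (cases "x < k")
  case False
  assume "x < 2*k"
  then have "x - k < k" using False by simp
  then show ?thesis using False by (simp add: mod_if)
qed simp

lemma idx_shift:
  fixes i j k l m :: nat
  assumes "j < k" "l < k" "m \<le> l" "i = (j + k - l) mod k"
  shows "(j + k - m) mod k = (i + (l - m)) mod k"
proof -
  have "(i + (l - m)) mod k = (j + k - l + (l - m)) mod k" using assms(4) by (simp add: mod_add_left_eq)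
  also have "j + k - l + (l - m) = j + k - m" using assms by simp
  finally show ?thesis by simp
qed

lemma idx_inv:
  fixes i j k l :: nat
  assumes "i < k" "j < k" "l < k"
  shows "((j + k - l) mod k = i) \<longleftrightarrow> (l = (j + k - i) mod k)"
proof -
  have a: "(j + k - l) mod k = (if j + k - l < k then j + k - l else j - l)"
    using mod2k[of "j + k - l" k] assms by auto
  have b: "(j + k - i) mod k = (if j + k - i < k then j + k - i else j - i)"
    using mod2k[of "j + k - i" k] assms by auto
  show ?thesis unfolding a b using assms by auto
qed

definition \<delta> :: "nat \<Rightarrow> nat \<Rightarrow> nat" where
  "\<delta> k i = (if i = k - 1 then 1 else 0)"

definition \<rho>G :: "nat \<Rightarrow> nat" where
  "\<rho>G i = (if even i then 0 else 2)"

definition \<sigma>j :: "nat \<Rightarrow> nat \<Rightarrow> nat list" where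
  "\<sigma>j k j = map (\<lambda>m. (j + k - m) mod k) [0..<k]"

definition \<epsilon>j :: "nat \<Rightarrow> nat \<Rightarrow> nat list" where
  "\<epsilon>j k j = map (\<lambda>m. \<delta> k ((j + k - m) mod k)) [0..<k]"

definition \<rho>j :: "nat \<Rightarrow> nat \<Rightarrow> nat" where
  "\<rho>j k j = \<rho>G ((j + 1) mod k)"

definition chainG :: "nat \<Rightarrow> (nat \<Rightarrow> nat) \<Rightarrow> nat \<Rightarrow> nat \<Rightarrow> bool" where
  "chainG k f i t \<longleftrightarrow> f ((i + t + 1) mod k) = (f ((i + t) mod k) + \<delta> k ((i + t) mod k)) mod 4"

definition Cond :: "nat \<Rightarrow> (nat \<Rightarrow> nat) \<Rightarrow> nat \<Rightarrow> nat \<Rightarrow> bool" where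
  "Cond k f i l \<longleftrightarrow> (\<forall>t<l. chainG k f i t) \<and> (Suc l < k \<longrightarrow> \<not> chainG k f i l) \<and> (Suc l = k \<longrightarrow> f i \<noteq> \<rho>G i)"

definition Dj :: "nat \<Rightarrow> nat \<Rightarrow> ((nat \<Rightarrow> nat) \<times> nat) set" where
  "Dj k j = OwnC (\<sigma>j k j) (\<epsilon>j k j) (\<rho>j k j)"

lemma \<sigma>j_nth: "m < k \<Longrightarrow> \<sigma>j k j ! m = (j + k - m) mod k"
  by (simp add: \<sigma>j_def)

lemma \<epsilon>j_nth: "m < k \<Longrightarrow> \<epsilon>j k j ! m = \<delta> k ((j + k - m) mod k)"
  by (simp add: \<epsilon>j_def)

lemma \<sigma>j_len[simp]: "length (\<sigma>j k j) = k" and \<epsilon>j_len[simp]: "length (\<epsilon>j k j) = k"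
  by (simp_all add: \<sigma>j_def \<epsilon>j_def)

lemma \<sigma>j_set: assumes "j < k" shows "set (\<sigma>j k j) = {..<k}"
proof
  show "set (\<sigma>j k j) \<subseteq> {..<k}" using assms by (auto simp: \<sigma>j_def)
next
  show "{..<k} \<subseteq> set (\<sigma>j k j)"
  proof
    fix x assume x: "x \<in> {..<k}"
    define m where "m = (j + k - x) mod k"
    have m: "m < k" using assms by (simp add: m_def)
    have "(j + k - m) mod k = x" using idx_inv[of x k j m] x assms m by (simp add: m_def)
    then show "x \<in> set (\<sigma>j k j)" using m unfolding \<sigma>j_def by force
  qed
qed

lemma \<sigma>j_distinct: assumes "j < k" shows "distinct (\<sigma>j k j)"
  unfolding \<sigma>j_def distinct_map
proof
  show "inj_on (\<lambda>m. (j + k - m) mod k) (set [0..<k])"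
  proof (rule inj_onI)
    fix m m' assume m: "m \<in> set [0..<k]" and m': "m' \<in> set [0..<k]" and e: "(j + k - m) mod k = (j + k - m') mod k"
    have mk: "m < k" "m' < k" using m m' by auto
    have "(j + k - m) mod k < k" using assms by simp
    then have "m = (j + k - (j + k - m) mod k) mod k" using idx_inv[of "(j + k - m) mod k" k j m] mk assms by simp
    moreover have "m' = (j + k - (j + k - m) mod k) mod k"
      using idx_inv[of "(j + k - m) mod k" k j m'] mk assms e \<open>(j + k - m) mod k < k\<close> by simp
    ultimately show "m = m'" by simp
  qed
qed simp

lemma Vs_\<sigma>j: assumes "j < k" shows "Vs (\<sigma>j k j) = TV k"
  using \<sigma>j_set[OF assms] by (auto simp: Vs_def TV_def not_less)


lemma Dj_mem:
  assumes j: "j < k" and i: "i < k"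
  shows "(f, i) \<in> Dj k j \<longleftrightarrow> f \<in> TV k \<and> Cond k f i ((j + k - i) mod k)"
proof -
  define L where "L = (j + k - i) mod k"
  define \<sigma> where "\<sigma> = \<sigma>j k j"
  define \<epsilon> where "\<epsilon> = \<epsilon>j k j"
  have Lk: "L < k" using j by (simp add: L_def)
  have iL: "(j + k - L) mod k = i" using idx_inv[OF i j Lk] L_def by simp
  have sel: "(i = \<sigma>!l) \<longleftrightarrow> l = L" if "l < k" for l
    using idx_inv[OF i j that] that by (auto simp: \<sigma>_def \<sigma>j_nth L_def)
  have "(f, i) \<in> Dj k j \<longleftrightarrow> f \<in> TV k \<and> (\<exists>l<k. i = \<sigma>!l \<and> Ch \<sigma> \<epsilon> f l \<and> Sk \<sigma> \<epsilon> (\<rho>j k j) f l)"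
    by (simp add: Dj_def OwnC_def Vs_\<sigma>j[OF j] \<sigma>_def \<epsilon>_def)
  also have "\<dots> \<longleftrightarrow> f \<in> TV k \<and> Ch \<sigma> \<epsilon> f L \<and> Sk \<sigma> \<epsilon> (\<rho>j k j) f L"
    using sel Lk by auto
  also have "Ch \<sigma> \<epsilon> f L \<longleftrightarrow> (\<forall>t<L. chainG k f i t)"
  proof -
    have eqm: "(f (\<sigma>!m) = (f (\<sigma>!Suc m) + \<epsilon>!Suc m) mod 4) \<longleftrightarrow> chainG k f i (L - Suc m)" if m: "m < L" for m
    proof -
      have a: "\<sigma>!m = (i + (L - m)) mod k" using idx_shift[OF j Lk _ iL[symmetric], of m] m Lk
        by (simp add: \<sigma>_def \<sigma>j_nth)
      have b: "\<sigma>!Suc m = (i + (L - Suc m)) mod k" using idx_shift[OF j Lk _ iL[symmetric], of "Suc m"] m Lk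
        by (simp add: \<sigma>_def \<sigma>j_nth)
      have c: "\<epsilon>!Suc m = \<delta> k ((i + (L - Suc m)) mod k)" using idx_shift[OF j Lk _ iL[symmetric], of "Suc m"] m Lk
        by (simp add: \<epsilon>_def \<epsilon>j_nth)
      have d: "i + (L - m) = i + (L - Suc m) + 1" using m by simp
      show ?thesis unfolding a b c chainG_def d by simp
    qed
    have "Ch \<sigma> \<epsilon> f L \<longleftrightarrow> (\<forall>m<L. chainG k f i (L - Suc m))" unfolding Ch_def using eqm by blast
    also have "\<dots> \<longleftrightarrow> (\<forall>t<L. chainG k f i t)"
    proof
      assume a: "\<forall>m<L. chainG k f i (L - Suc m)"
      show "\<forall>t<L. chainG k f i t"
      proof (intro allI impI)
        fix t assume "t < L"
        then have "L - Suc t < L" "L - Suc (L - Suc t) = t" by auto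
        then show "chainG k f i t" using a by metis
      qed
    qed auto
    finally show ?thesis .
  qed
  also have "Sk \<sigma> \<epsilon> (\<rho>j k j) f L \<longleftrightarrow> (Suc L < k \<longrightarrow> \<not> chainG k f i L) \<and> (Suc L = k \<longrightarrow> f i \<noteq> \<rho>G i)"
  proof -
    have k0: "k \<noteq> 0" using i by simp
    have s0: "\<sigma>!0 = (i + L) mod k" using idx_shift[OF j Lk _ iL[symmetric], of 0] k0
      by (simp add: \<sigma>_def \<sigma>j_nth)
    have e0: "\<epsilon>!0 = \<delta> k ((i + L) mod k)" using idx_shift[OF j Lk _ iL[symmetric], of 0] k0
      by (simp add: \<epsilon>_def \<epsilon>j_nth)
    have jj: "j = (i + L) mod k" using s0 j k0 by (simp add: \<sigma>_def \<sigma>j_nth)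
    have lastj: "last \<sigma> = (j + 1) mod k"
    proof -
      have "\<sigma> \<noteq> []" using k0 by (simp add: \<sigma>_def \<sigma>j_def)
      then have "last \<sigma> = \<sigma>!(k - 1)" by (simp add: last_conv_nth \<sigma>_def)
      also have "\<dots> = (j + k - (k - 1)) mod k" using k0 by (simp add: \<sigma>_def \<sigma>j_nth)
      also have "j + k - (k - 1) = j + 1" using k0 by simp
      finally show ?thesis .
    qed
    have lastL: "last \<sigma> = (i + L + 1) mod k" using lastj jj by (simp add: mod_Suc_eq)
    have top: "(i + L + 1) mod k = i" if "Suc L = k"
    proof -
      have e: "i + L + 1 = i + k" using that by simp
      have "(i + L + 1) mod k = (i + k) mod k" by (simp only: e)
      also have "\<dots> = i" using i by simp
      finally show ?thesis .
    qed
    have c1: "(f (last \<sigma>) \<noteq> (f (\<sigma>!0) + \<epsilon>!0) mod 4) \<longleftrightarrow> \<not> chainG k f i L"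
      unfolding chainG_def lastL s0 e0 by simp
    have c2: "(f (last \<sigma>) \<noteq> \<rho>j k j) \<longleftrightarrow> (f i \<noteq> \<rho>G i)" if "Suc L = k"
    proof -
      have "last \<sigma> = i" using lastL top[OF that] by simp
      moreover have "\<rho>j k j = \<rho>G (last \<sigma>)" using lastj by (simp add: \<rho>j_def)
      ultimately show ?thesis by simp
    qed
    have lenk: "length \<sigma> = k" by (simp add: \<sigma>_def)
    show ?thesis unfolding Sk_def lenk using c1 c2 by blast
  qed
  finally show ?thesis by (simp add: Cond_def L_def)
qed

definition Mcond :: "nat \<Rightarrow> (nat \<Rightarrow> nat) \<Rightarrow> nat \<Rightarrow> bool" where
  "Mcond k f i \<longleftrightarrow> (\<forall>t<k - 1. chainG k f i t) \<and> f i = \<rho>G i"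

definition DM :: "nat \<Rightarrow> ((nat \<Rightarrow> nat) \<times> nat) set" where
  "DM k = {(f, i). f \<in> TV k \<and> i < k \<and> Mcond k f i}"

lemma Cond_uniq:
  assumes "l < k" "l' < k" "Cond k f i l" "Cond k f i l'"
  shows "l = l'"
proof (rule ccontr)
  assume "l \<noteq> l'"
  then consider "l < l'" | "l' < l" by linarith
  then show False
  proof cases
    case 1
    then have "\<not> chainG k f i l" using assms by (simp add: Cond_def)
    moreover have "chainG k f i l" using assms(4) 1 by (simp add: Cond_def)
    ultimately show False by simp
  next
    case 2
    then have "\<not> chainG k f i l'" using assms by (simp add: Cond_def)
    moreover have "chainG k f i l'" using assms(3) 2 by (simp add: Cond_def)
    ultimately show False by simp
  qed
qed

lemma Cond_notM:
  assumes "l < k" "Cond k f i l" shows "\<not> Mcond k f i"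
proof
  assume M: "Mcond k f i"
  show False
  proof (cases "Suc l < k")
    case True
    then have "\<not> chainG k f i l" using assms(2) by (simp add: Cond_def)
    moreover have "l < k - 1" using True by simp
    then have "chainG k f i l" using M by (simp add: Mcond_def)
    ultimately show False by simp
  next
    case False
    then have "Suc l = k" using assms(1) by simp
    then have "f i \<noteq> \<rho>G i" using assms(2) by (simp add: Cond_def)
    then show False using M by (simp add: Mcond_def)
  qed
qed

lemma Cond_cover:
  assumes "\<not> Mcond k f i" "0 < k"
  shows "\<exists>l<k. Cond k f i l"
proof (cases "\<forall>t<k - 1. chainG k f i t")
  case True
  then have "f i \<noteq> \<rho>G i" using assms(1) by (simp add: Mcond_def)
  then have "Cond k f i (k - 1)" using True assms(2) by (simp add: Cond_def)
  then show ?thesis using assms(2) by (intro exI[of _ "k - 1"]) simp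
next
  case False
  then obtain t where t: "t < k - 1" "\<not> chainG k f i t" by blast
  define l where "l = (LEAST t. t < k - 1 \<and> \<not> chainG k f i t)"
  have l: "l < k - 1" "\<not> chainG k f i l" using LeastI[of "\<lambda>t. t < k - 1 \<and> \<not> chainG k f i t" t] t
    by (simp_all add: l_def)
  have "chainG k f i t'" if "t' < l" for t'
  proof (rule ccontr)
    assume "\<not> chainG k f i t'"
    then have "l \<le> t'" using that l(1) unfolding l_def by (intro Least_le) simp
    then show False using that by simp
  qed
  moreover have "Suc l \<noteq> k" using l(1) by simp
  ultimately have "Cond k f i l" using l by (simp add: Cond_def)
  then show ?thesis using l(1) by (intro exI[of _ l]) simp
qed

lemma idx_inj:
  fixes i j j' k :: nat
  assumes "i < k" "j < k" "j' < k" "(j + k - i) mod k = (j' + k - i) mod k"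
  shows "j = j'"
proof -
  have r: "(i + (x + k - i) mod k) mod k = x" if "x < k" for x
  proof -
    have "(i + (x + k - i) mod k) mod k = (i + (x + k - i)) mod k" by (simp add: mod_add_right_eq)
    also have "i + (x + k - i) = x + k" using assms(1) by simp
    finally show ?thesis using that by simp
  qed
  have "j = (i + (j + k - i) mod k) mod k" using r[OF assms(2)] by simp
  also have "\<dots> = (i + (j' + k - i) mod k) mod k" using assms(4) by simp
  also have "\<dots> = j'" using r[OF assms(3)] .
  finally show ?thesis .
qed

lemma idx_surj:
  fixes i l k :: nat
  assumes "i < k" "l < k"
  shows "(i + l) mod k < k \<and> (((i + l) mod k) + k - i) mod k = l"
proof -
  have "((i + l) mod k + k - i) mod k = l"
  proof -
    have a: "(i + l) mod k = (if i + l < k then i + l else i + l - k)" using mod2k[of "i + l" k] assms by auto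
    show ?thesis
    proof (cases "i + l < k")
      case True
      then have "(i + l) mod k + k - i = l + k" using a by simp
      then show ?thesis using assms by simp
    next
      case False
      then have "(i + l) mod k + k - i = l" using a by simp
      then show ?thesis using assms by simp
    qed
  qed
  then show ?thesis using assms by simp
qed

lemma Dj_sub: "j < k \<Longrightarrow> Dj k j \<subseteq> Darts k"
proof
  fix z assume j: "j < k" and z: "z \<in> Dj k j"
  obtain f i where zz: "z = (f, i)" by (cases z)
  have "f \<in> Vs (\<sigma>j k j)" "i \<in> set (\<sigma>j k j)" using z zz OwnC_Vs OwnC_dir by (auto simp: Dj_def)
  then show "z \<in> Darts k" using zz Vs_\<sigma>j[OF j] \<sigma>j_set[OF j] by (auto simp: Darts_def)
qed

lemma DM_sub: "DM k \<subseteq> Darts k"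
  by (auto simp: DM_def Darts_def)

lemma Dj_disj:
  assumes "j < k" "j' < k" "j \<noteq> j'"
  shows "Dj k j \<inter> Dj k j' = {}"
proof (rule ccontr)
  assume "Dj k j \<inter> Dj k j' \<noteq> {}"
  then obtain f i where fi: "(f, i) \<in> Dj k j" "(f, i) \<in> Dj k j'" by auto
  have i: "i < k" using Dj_sub[OF assms(1)] fi(1) by (auto simp: Darts_def)
  have c: "Cond k f i ((j + k - i) mod k)" "Cond k f i ((j' + k - i) mod k)"
    using fi Dj_mem[OF assms(1) i] Dj_mem[OF assms(2) i] by auto
  have b: "(j + k - i) mod k < k" "(j' + k - i) mod k < k" using i by simp_all
  have "(j + k - i) mod k = (j' + k - i) mod k" using Cond_uniq[OF b c] .
  then show False using idx_inj[OF i assms(1,2)] assms(3) by simp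
qed

lemma Dj_DM_disj:
  assumes "j < k"
  shows "Dj k j \<inter> DM k = {}"
proof (rule ccontr)
  assume "Dj k j \<inter> DM k \<noteq> {}"
  then obtain f i where fi: "(f, i) \<in> Dj k j" "(f, i) \<in> DM k" by auto
  have i: "i < k" using fi(2) by (simp add: DM_def)
  have "Cond k f i ((j + k - i) mod k)" using fi Dj_mem[OF assms(1) i] by auto
  moreover have "(j + k - i) mod k < k" using i by simp
  ultimately have "\<not> Mcond k f i" using Cond_notM by blast
  then show False using fi(2) by (simp add: DM_def)
qed

lemma Darts_cover:
  "Darts k = (\<Union>j<k. Dj k j) \<union> DM k"
proof
  show "(\<Union>j<k. Dj k j) \<union> DM k \<subseteq> Darts k" using Dj_sub DM_sub by blast
next
  show "Darts k \<subseteq> (\<Union>j<k. Dj k j) \<union> DM k"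
  proof
    fix z assume z: "z \<in> Darts k"
    obtain f i where zz: "z = (f, i)" by (cases z)
    have f: "f \<in> TV k" and i: "i < k" using z zz by (auto simp: Darts_def)
    show "z \<in> (\<Union>j<k. Dj k j) \<union> DM k"
    proof (cases "Mcond k f i")
      case True then show ?thesis using f i zz by (simp add: DM_def)
    next
      case False
      then obtain l where l: "l < k" "Cond k f i l" using Cond_cover i by (metis gr_zeroI not_less0)
      define j where "j = (i + l) mod k"
      have j: "j < k" "(j + k - i) mod k = l" using idx_surj[OF i l(1)] by (simp_all add: j_def)
      have "(f, i) \<in> Dj k j" using Dj_mem[OF j(1) i] f l(2) j(2) by simp
      then show ?thesis using j(1) zz by blast
    qed
  qed
qed

definition thr :: "nat \<Rightarrow> nat \<Rightarrow> nat \<Rightarrow> (nat \<Rightarrow> nat)" where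
  "thr k a p = (\<lambda>x. if x < k then (if x < p then a + 1 else a) else 0)"

lemma val_step:
  fixes i t k :: nat
  assumes i: "i < k" and t: "t < k - 1"
  shows "(if (i + t + 1) mod k < i then 1 else 0) = (if (i + t) mod k < i then 1 else 0) + \<delta> k ((i + t) mod k)"
proof -
  consider (A) "i + t + 1 < k" | (B) "i + t + 1 = k" | (C) "k < i + t + 1" by linarith
  then show ?thesis
  proof cases
    case A
    then have "(i + t) mod k = i + t" "(i + t + 1) mod k = i + t + 1" by simp_all
    moreover have "i + t \<noteq> k - 1" using A by simp
    ultimately show ?thesis by (simp add: \<delta>_def)
  next
    case B
    then have "(i + t) mod k = k - 1" by simp
    moreover have "(i + t + 1) mod k = 0" using B by simp
    moreover have "0 < i" using B t by simp
    moreover have "\<not> k - 1 < i" using i by simp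
    ultimately show ?thesis by (simp add: \<delta>_def)
  next
    case C
    have "(i + t) mod k = i + t - k" using mod2k[of "i + t" k] C t i by auto
    moreover have "(i + t + 1) mod k = i + t + 1 - k" using mod2k[of "i + t + 1" k] C t i by auto
    moreover have "i + t - k < i" "i + t + 1 - k < i" "i + t - k \<noteq> k - 1" using C t i by auto
    ultimately show ?thesis by (simp add: \<delta>_def)
  qed
qed

lemma thr_val: "x < k \<Longrightarrow> thr k a p x = a + (if x < p then 1 else 0)"
  by (simp add: thr_def)

lemma thr_chain:
  assumes i: "i < k" and t: "t < k - 1" and a: "a \<le> 2"
  shows "chainG k (thr k a i) i t"
proof -
  have k: "0 < k" using i by simp
  have x0: "(i + t) mod k < k" and x1: "(i + t + 1) mod k < k" using k by simp_all
  have "thr k a i ((i + t + 1) mod k) = a + (if (i + t + 1) mod k < i then 1 else 0)" using thr_val[OF x1] .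
  also have "\<dots> = a + (if (i + t) mod k < i then 1 else 0) + \<delta> k ((i + t) mod k)" using val_step[OF i t] by simp
  also have "\<dots> = (thr k a i ((i + t) mod k) + \<delta> k ((i + t) mod k)) mod 4"
  proof -
    have "a + (if (i + t) mod k < i then 1 else 0) + \<delta> k ((i + t) mod k) \<le> 3"
      using val_step[OF i t] a by (simp split: if_splits)
    then show ?thesis using thr_val[OF x0] by simp
  qed
  finally show ?thesis by (simp add: chainG_def)
qed

lemma rho_le: "\<rho>G i \<le> 2" and rho_cases: "\<rho>G i = 0 \<or> \<rho>G i = 2"
  by (simp_all add: \<rho>G_def)

lemma thr_TV: "a \<le> 2 \<Longrightarrow> thr k a p \<in> TV k"
  by (simp add: thr_def TV_def)

lemma M_sat: "i < k \<Longrightarrow> Mcond k (thr k (\<rho>G i) i) i"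
  unfolding Mcond_def using thr_chain[OF _ _ rho_le] by (simp add: thr_def)

lemma mod_back: "i < k \<Longrightarrow> x < k \<Longrightarrow> (i + (x + k - i) mod k) mod k = (x::nat)"
proof -
  assume i: "i < k" and x: "x < k"
  have "(i + (x + k - i) mod k) mod k = (i + (x + k - i)) mod k" by (simp add: mod_add_right_eq)
  also have "i + (x + k - i) = x + k" using i by simp
  finally show ?thesis using x by simp
qed

lemma M_unique:
  assumes f: "f \<in> TV k" and i: "i < k" and M: "Mcond k f i"
  shows "f = thr k (\<rho>G i) i"
proof -
  define a where "a = \<rho>G i"
  have a2: "a \<le> 2" by (simp add: a_def rho_le)
  have k: "0 < k" using i by simp
  have step: "f ((i + t) mod k) = thr k a i ((i + t) mod k)" if "t < k" for t
    using that
  proof (induction t)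
    case 0
    then show ?case using M i by (simp add: Mcond_def thr_def a_def)
  next
    case (Suc t)
    then have t: "t < k - 1" by simp
    have ch: "chainG k f i t" using M t by (simp add: Mcond_def)
    have ct: "chainG k (thr k a i) i t" using thr_chain[OF i t a2] .
    have IH: "f ((i + t) mod k) = thr k a i ((i + t) mod k)" using Suc by simp
    have "f ((i + Suc t) mod k) = (f ((i + t) mod k) + \<delta> k ((i + t) mod k)) mod 4"
      using ch by (simp add: chainG_def)
    also have "\<dots> = (thr k a i ((i + t) mod k) + \<delta> k ((i + t) mod k)) mod 4" using IH by simp
    also have "\<dots> = thr k a i ((i + Suc t) mod k)" using ct by (simp add: chainG_def)
    finally show ?case .
  qed
  show ?thesis
  proof (rule ext)
    fix x
    show "f x = thr k (\<rho>G i) i x"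
    proof (cases "x < k")
      case True
      have "f ((i + (x + k - i) mod k) mod k) = thr k a i ((i + (x + k - i) mod k) mod k)"
        using step[of "(x + k - i) mod k"] k by simp
      then show ?thesis using mod_back[OF i True] by (simp add: a_def)
    next
      case False
      then show ?thesis using f by (simp add: TV_def thr_def)
    qed
  qed
qed

lemma DM_eq: "DM k = (\<lambda>i. (thr k (\<rho>G i) i, i)) ` {..<k}"
proof
  show "DM k \<subseteq> (\<lambda>i. (thr k (\<rho>G i) i, i)) ` {..<k}"
  proof
    fix z assume "z \<in> DM k"
    then obtain f i where "z = (f, i)" "f \<in> TV k" "i < k" "Mcond k f i" by (auto simp: DM_def)
    then show "z \<in> (\<lambda>i. (thr k (\<rho>G i) i, i)) ` {..<k}" using M_unique by blast
  qed
next
  show "(\<lambda>i. (thr k (\<rho>G i) i, i)) ` {..<k} \<subseteq> DM k"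
    using M_sat thr_TV[OF rho_le] by (auto simp: DM_def)
qed

lemma up_thr: "i < k \<Longrightarrow> a \<le> 2 \<Longrightarrow> up (thr k a i) i = thr k a (Suc i)"
  by (auto simp: up_def thr_def fun_eq_iff)

lemma thr_eq:
  assumes k: "0 < k" and a: "a = 0 \<or> a = 2" and a': "a' = 0 \<or> a' = 2" and p: "p \<le> k" and p': "p' \<le> k"
    and e: "thr k a p = thr k a' p'"
  shows "a = a' \<and> p = p'"
proof -
  have "thr k a p (k - 1) = thr k a' p' (k - 1)" using e by simp
  moreover have "thr k a p (k - 1) = a \<or> thr k a p (k - 1) = a + 1" using k by (simp add: thr_def)
  moreover have "thr k a' p' (k - 1) = a' \<or> thr k a' p' (k - 1) = a' + 1" using k by (simp add: thr_def)
  ultimately have aa: "a = a'" using a a' by auto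
  have "p = p'"
  proof (rule ccontr)
    assume "p \<noteq> p'"
    then consider "p < p'" | "p' < p" by linarith
    then show False
    proof cases
      case 1
      then have "p < k" using p' by simp
      have "thr k a p p = thr k a' p' p" using e by simp
      then show False using 1 \<open>p < k\<close> aa by (simp add: thr_def)
    next
      case 2
      then have "p' < k" using p by simp
      have "thr k a p p' = thr k a' p' p'" using e by simp
      then show False using 2 \<open>p' < k\<close> aa by (simp add: thr_def)
    qed
  qed
  then show ?thesis using aa by simp
qed

lemma match_disj:
  assumes i: "i < k" and i': "i' < k" and ne: "i \<noteq> i'"
  shows "{thr k (\<rho>G i) i, thr k (\<rho>G i) (Suc i)} \<inter> {thr k (\<rho>G i') i', thr k (\<rho>G i') (Suc i')} = {}"
proof (rule ccontr)
  assume "{thr k (\<rho>G i) i, thr k (\<rho>G i) (Suc i)} \<inter> {thr k (\<rho>G i') i', thr k (\<rho>G i') (Suc i')} \<noteq> {}"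
  then obtain p p' where pp: "p = i \<or> p = Suc i" "p' = i' \<or> p' = Suc i'" "thr k (\<rho>G i) p = thr k (\<rho>G i') p'"
    by blast
  have k: "0 < k" using i by simp
  have "\<rho>G i = \<rho>G i' \<and> p = p'"
    using thr_eq[OF k rho_cases rho_cases _ _ pp(3)] pp(1,2) i i' by auto
  then have "even i = even i'" "p = p'" by (auto simp: \<rho>G_def split: if_splits)
  then show False using pp(1,2) ne by auto
qed

lemma Eenc_edge: "Eenc k d = enc k ` edge_of d"
  by (simp add: Eenc_def edge_of_def)

lemma enc_inj_on: "inj_on (enc k) (TV k)"
  by (rule inj_onI) (rule enc_inj)

lemma tree_hc:
  assumes j: "j < k"
  shows "spanning_tree (hc_verts (2*k)) (hc_edges (2*k)) (Eenc k ` Dj k j)"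
proof -
  have "IsTree (Vs (\<sigma>j k j)) (OwnC (\<sigma>j k j) (\<epsilon>j k j) (\<rho>j k j))"
  proof (rule own_tree)
    show "distinct (\<sigma>j k j)" using \<sigma>j_distinct[OF j] .
    show "\<sigma>j k j \<noteq> []" using j by (simp add: \<sigma>j_def)
    show "length (\<epsilon>j k j) = length (\<sigma>j k j)" by simp
    show "\<forall>e\<in>set (\<epsilon>j k j). e < 4" by (auto simp: \<epsilon>j_def \<delta>_def)
    show "\<rho>j k j < 4" using rho_le[of "(j + 1) mod k"] by (simp add: \<rho>j_def)
  qed
  then have "IsTree (TV k) (Dj k j)" using Vs_\<sigma>j[OF j] by (simp add: Dj_def)
  then obtain P r and h :: "(nat \<Rightarrow> nat) \<Rightarrow> nat" where
    r: "r \<in> TV k" and Pa: "\<forall>v\<in>TV k. v \<noteq> r \<longrightarrow> P v \<in> TV k \<and> h (P v) < h v"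
    and E: "edge_of ` Dj k j = {{v, P v} | v. v \<in> TV k \<and> v \<noteq> r}"
    unfolding IsTree_def by (elim exE conjE)
  define P' where "P' u = enc k (P (dec k u))" for u
  define r' where "r' = enc k r"
  define h' where "h' u = h (dec k u)" for u
  show ?thesis
  proof (rule parent_tree[where P = P' and r = r' and h = h'])
    show "r' \<in> hc_verts (2*k)" by (simp add: r'_def enc_in)
  next
    fix u assume u: "u \<in> hc_verts (2*k)" "u \<noteq> r'"
    have du: "dec k u \<in> TV k" by (rule dec_in)
    have dr: "dec k u \<noteq> r" using u enc_dec[OF u(1)] by (auto simp: r'_def)
    have Pd: "P (dec k u) \<in> TV k" "h (P (dec k u)) < h (dec k u)" using Pa du dr by auto
    show "P' u \<in> hc_verts (2*k) \<and> h' (P' u) < h' u"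
      using Pd by (simp add: P'_def h'_def enc_in dec_enc)
  next
    show "Eenc k ` Dj k j = {{u, P' u} | u. u \<in> hc_verts (2*k) \<and> u \<noteq> r'}"
    proof -
      have "Eenc k ` Dj k j = (\<lambda>e. enc k ` e) ` (edge_of ` Dj k j)" by (auto simp: Eenc_edge image_image)
      also have "\<dots> = (\<lambda>e. enc k ` e) ` {{v, P v} | v. v \<in> TV k \<and> v \<noteq> r}" using E by simp
      also have "\<dots> = {{u, P' u} | u. u \<in> hc_verts (2*k) \<and> u \<noteq> r'}"
      proof (rule set_eqI, rule iffI)
        fix e assume "e \<in> (\<lambda>e. enc k ` e) ` {{v, P v} | v. v \<in> TV k \<and> v \<noteq> r}"
        then obtain v where v: "v \<in> TV k" "v \<noteq> r" "e = {enc k v, enc k (P v)}" by auto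
        have "enc k v \<in> hc_verts (2*k)" "enc k v \<noteq> r'" "P' (enc k v) = enc k (P v)"
          using v enc_inj[OF v(1) r] by (auto simp: enc_in r'_def P'_def dec_enc)
        then show "e \<in> {{u, P' u} | u. u \<in> hc_verts (2*k) \<and> u \<noteq> r'}" using v(3) by auto
      next
        fix e assume "e \<in> {{u, P' u} | u. u \<in> hc_verts (2*k) \<and> u \<noteq> r'}"
        then obtain u where u: "u \<in> hc_verts (2*k)" "u \<noteq> r'" "e = {u, P' u}" by auto
        have "dec k u \<in> TV k" "dec k u \<noteq> r" using u enc_dec[OF u(1)] dec_in by (auto simp: r'_def)
        moreover have "e = enc k ` {dec k u, P (dec k u)}" using u enc_dec[OF u(1)] by (simp add: P'_def)
        ultimately show "e \<in> (\<lambda>e. enc k ` e) ` {{v, P v} | v. v \<in> TV k \<and> v \<noteq> r}" by blast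
      qed
      finally show ?thesis .
    qed
  next
    show "Eenc k ` Dj k j \<subseteq> hc_edges (2*k)" using Dj_sub[OF j] Eenc_in by blast
  qed
qed

theorem mainTheorem3:
  fixes k :: nat
  assumes "k \<ge> 1"
  shows "\<exists>T :: nat \<Rightarrow> bool list set set. \<exists>M.
           (\<forall>i<k. spanning_tree (hc_verts (2*k)) (hc_edges (2*k)) (T i))
         \<and> (\<forall>i<k. \<forall>j<k. i \<noteq> j \<longrightarrow> T i \<inter> T j = {})
         \<and> matching (hc_edges (2*k)) M \<and> card M = k
         \<and> (\<forall>i<k. T i \<inter> M = {})
         \<and> (\<Union>i<k. T i) \<union> M = hc_edges (2*k)"
proof -
  define T where "T j = Eenc k ` Dj k j" for j
  define M where "M = Eenc k ` DM k"
  have inj: "inj_on (Eenc k) (Darts k)" by (rule Eenc_inj)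
  have t1: "\<forall>i<k. spanning_tree (hc_verts (2*k)) (hc_edges (2*k)) (T i)"
    using tree_hc by (simp add: T_def)
  have t2: "\<forall>i<k. \<forall>j<k. i \<noteq> j \<longrightarrow> T i \<inter> T j = {}"
  proof (intro allI impI)
    fix i j assume ij: "i < k" "j < k" "i \<noteq> j"
    have "T i \<inter> T j = Eenc k ` (Dj k i \<inter> Dj k j)"
      unfolding T_def by (rule inj_on_image_Int[OF inj Dj_sub[OF ij(1)] Dj_sub[OF ij(2)], symmetric])
    then show "T i \<inter> T j = {}" using Dj_disj[OF ij] by simp
  qed
  have t5: "\<forall>i<k. T i \<inter> M = {}"
  proof (intro allI impI)
    fix i assume i: "i < k"
    have "T i \<inter> M = Eenc k ` (Dj k i \<inter> DM k)"
      unfolding T_def M_def by (rule inj_on_image_Int[OF inj Dj_sub[OF i] DM_sub, symmetric])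
    then show "T i \<inter> M = {}" using Dj_DM_disj[OF i] by simp
  qed
  have t6: "(\<Union>i<k. T i) \<union> M = hc_edges (2*k)"
    unfolding T_def M_def hc_edges_eq Darts_cover[of k] by (simp add: image_Un image_UN)
  have Medge: "Eenc k (thr k (\<rho>G i) i, i) = enc k ` {thr k (\<rho>G i) i, thr k (\<rho>G i) (Suc i)}" if "i < k" for i
    using up_thr[OF that rho_le] by (simp add: Eenc_def)
  have t3: "matching (hc_edges (2*k)) M"
    unfolding matching_def
  proof
    have "\<forall>d\<in>DM k. Eenc k d \<in> hc_edges (2*k)" using DM_sub[of k] Eenc_in[of _ k] by blast
    then show "M \<subseteq> hc_edges (2*k)" by (auto simp: M_def)
  next
    show "\<forall>e\<in>M. \<forall>f\<in>M. e \<noteq> f \<longrightarrow> e \<inter> f = {}"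
    proof (intro ballI impI)
      fix e f assume e: "e \<in> M" and f: "f \<in> M" and ef: "e \<noteq> f"
      obtain i where i: "i < k" "e = Eenc k (thr k (\<rho>G i) i, i)" using e by (auto simp: M_def DM_eq)
      obtain i' where i': "i' < k" "f = Eenc k (thr k (\<rho>G i') i', i')" using f by (auto simp: M_def DM_eq)
      have ne: "i \<noteq> i'" using ef i i' by auto
      have sub: "{thr k (\<rho>G i) i, thr k (\<rho>G i) (Suc i)} \<subseteq> TV k" "{thr k (\<rho>G i') i', thr k (\<rho>G i') (Suc i')} \<subseteq> TV k"
        using thr_TV[OF rho_le] by auto
      have "e \<inter> f = enc k ` ({thr k (\<rho>G i) i, thr k (\<rho>G i) (Suc i)} \<inter> {thr k (\<rho>G i') i', thr k (\<rho>G i') (Suc i')})"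
        using i i' Medge inj_on_image_Int[OF enc_inj_on sub] by simp
      then show "e \<inter> f = {}" using match_disj[OF i(1) i'(1) ne] by simp
    qed
  qed
  have t4: "card M = k"
  proof -
    have "card M = card (DM k)" unfolding M_def by (rule card_image[OF inj_on_subset[OF inj DM_sub]])
    also have "\<dots> = card {..<k}" unfolding DM_eq by (rule card_image) (auto intro: inj_onI)
    finally show ?thesis by simp
  qed
  show ?thesis using t1 t2 t3 t4 t5 t6 by blast
qed

end
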